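(* For $k\geqslant 0$ let $B_k$ be the number of equivalence classes, with respect to the relation $\cong$, of ultrametric spaces $(X,d)\in\mathfrak U$ with $|X|=k+1$. Then for every $k\geqslant1$ $$B_k=\begin{cases}\dfrac{B_i(B_i+1)}{2}+\sum\limits_{j=0}^{i-1}B_{k-j-1}B_j, & \text{if } k=2i+1,\\[2mm] \sum\limits_{j=0}^{i-1}B_{k-j-1}B_j, & \text{if } k=2i,\end{cases}$$ and $B_1=B_2=1$, $B_3=2$.
   Context: $\operatorname{Sp}(X)=\{d(x,y):x\neq y\}$; $\mathfrak U$ is the class of finite ultrametric spaces $X$ with $|\operatorname{Sp}(X)|=|X|-1$. For a finite ultrametric space $X$ (assumed, up to isometry, to satisfy $X\cap\operatorname{Sp}(X)=\varnothing$), the representing tree $T_X$ is the labelled rooted tree defined recursively: for $X=\{x\}$ it is a single node labelled $x$; for $|X|\ge2$ the root is labelled $\operatorname{diam}X$ and has one child for each class $X_i$ of the equivalence relation $x\sim y\iff d(x,y)<\operatorname{diam}X$, that child being labelled $x$ if $X_i=\{x\}$ and otherwise labelled $\operatorname{diam}X_i$ and carrying the recursively constructed tree for $X_i$. $\overline{T}_X$ is $T_X$ with labels erased. For finite ultrametric spaces $X,Y$, $X\cong Y$ means that the rooted trees $\overline{T}_X$ and $\overline{T}_Y$ are isomorphic. *)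

theory Defs
  imports Complex_Main
begin

text \<open>A finite metric space is given by a carrier set X and a distance d
  (only its values on X matter).\<close>

definition ultrametric :: "'a set \<Rightarrow> ('a \<Rightarrow> 'a \<Rightarrow> real) \<Rightarrow> bool" where
  "ultrametric X d \<longleftrightarrow>
     (\<forall>x\<in>X. \<forall>y\<in>X. d x y \<ge> 0 \<and> (d x y = 0 \<longleftrightarrow> x = y) \<and> d x y = d y x) \<and>
     (\<forall>x\<in>X. \<forall>y\<in>X. \<forall>z\<in>X. d x y \<le> max (d x z) (d z y))"

definition Sp :: "'a set \<Rightarrow> ('a \<Rightarrow> 'a \<Rightarrow> real) \<Rightarrow> real set" where
  "Sp X d = {d x y | x y. x \<in> X \<and> y \<in> X \<and> x \<noteq> y}"

definition diam :: "'a set \<Rightarrow> ('a \<Rightarrow> 'a \<Rightarrow> real) \<Rightarrow> real" where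
  "diam X d = Max {d x y | x y. x \<in> X \<and> y \<in> X}"

definition in_U :: "'a set \<Rightarrow> ('a \<Rightarrow> 'a \<Rightarrow> real) \<Rightarrow> bool" where
  "in_U X d \<longleftrightarrow> finite X \<and> X \<noteq> {} \<and> ultrametric X d \<and> card (Sp X d) = card X - 1"

text \<open>A node of the tree T_X is
  identified with the set of points (leaves) below it: the root is X, a node A
  with at least two points has as children the classes of the relation
  d x y < diam A, and a singleton is a leaf.\<close>
definition tchildren :: "('a \<Rightarrow> 'a \<Rightarrow> real) \<Rightarrow> 'a set \<Rightarrow> 'a set set" where
  "tchildren d A = (if card A \<ge> 2 then {{y \<in> A. d x y < diam A d} | x. x \<in> A} else {})"

inductive_set tnodes :: "'a set \<Rightarrow> ('a \<Rightarrow> 'a \<Rightarrow> real) \<Rightarrow> 'a set set"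
  for X :: "'a set" and d :: "'a \<Rightarrow> 'a \<Rightarrow> real" where
  root: "X \<in> tnodes X d"
| child: "A \<in> tnodes X d \<Longrightarrow> B \<in> tchildren d A \<Longrightarrow> B \<in> tnodes X d"

definition tree_iso :: "'a set \<Rightarrow> ('a \<Rightarrow> 'a \<Rightarrow> real) \<Rightarrow> 'b set \<Rightarrow> ('b \<Rightarrow> 'b \<Rightarrow> real) \<Rightarrow> bool" where
  "tree_iso X d Y e \<longleftrightarrow>
     (\<exists>f. bij_betw f (tnodes X d) (tnodes Y e) \<and> f X = Y \<and>
        (\<forall>A\<in>tnodes X d. \<forall>B\<in>tnodes X d. B \<in> tchildren d A \<longleftrightarrow> f B \<in> tchildren e (f A)))"

text \<open>Spaces of U with k+1 points (carriers taken inside nat; every finite space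
  is isometric to one of these).\<close>
definition U_spaces :: "nat \<Rightarrow> (nat set \<times> (nat \<Rightarrow> nat \<Rightarrow> real)) set" where
  "U_spaces k = {(X, d). in_U X d \<and> card X = k + 1}"

definition B :: "nat \<Rightarrow> nat" where
  "B k = card (U_spaces k //
     {(p, q). p \<in> U_spaces k \<and> q \<in> U_spaces k \<and> tree_iso (fst p) (snd p) (fst q) (snd q)})"

end

theory Submission
  imports Defs "HOL-Library.Multiset"
begin

lemma diam_ge:
  assumes "finite A" "x \<in> A" "y \<in> A"
  shows "d x y \<le> diam A d"
proof -
  have "finite {d x y | x y. x \<in> A \<and> y \<in> A}"
  proof -
    have "{d x y | x y. x \<in> A \<and> y \<in> A} = (\<lambda>(x,y). d x y) ` (A \<times> A)" by auto
    thus ?thesis using assms by simp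
  qed
  thus ?thesis unfolding diam_def using assms by (intro Max_ge) auto
qed

lemma diam_attained:
  assumes "finite A" "A \<noteq> {}"
  shows "\<exists>a\<in>A. \<exists>b\<in>A. diam A d = d a b"
proof -
  have e: "{d x y | x y. x \<in> A \<and> y \<in> A} = (\<lambda>(x,y). d x y) ` (A \<times> A)" by auto
  have "finite {d x y | x y. x \<in> A \<and> y \<in> A}" "{d x y | x y. x \<in> A \<and> y \<in> A} \<noteq> {}"
    using assms unfolding e by auto
  hence "diam A d \<in> {d x y | x y. x \<in> A \<and> y \<in> A}" unfolding diam_def by (rule Max_in)
  thus ?thesis by auto
qed

lemma ultrametric_subset: "ultrametric X d \<Longrightarrow> A \<subseteq> X \<Longrightarrow> ultrametric A d"
  unfolding ultrametric_def by (meson subsetD)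

lemma um_facts:
  assumes "ultrametric X d" "x \<in> X" "y \<in> X"
  shows "d x y \<ge> 0" "d x x = 0" "d x y = d y x" "x \<noteq> y \<Longrightarrow> d x y > 0"
  using assms unfolding ultrametric_def by (simp_all add: less_le)

lemma um_tri:
  assumes "ultrametric X d" "x \<in> X" "y \<in> X" "z \<in> X"
  shows "d x y \<le> max (d x z) (d z y)"
proof -
  have "\<forall>x\<in>X. \<forall>y\<in>X. \<forall>z\<in>X. d x y \<le> max (d x z) (d z y)"
    using assms(1) unfolding ultrametric_def by (rule conjunct2)
  thus ?thesis using assms(2-4) by blast
qed

lemma diam_pos:
  assumes "ultrametric A d" "finite A" "card A \<ge> 2"
  shows "diam A d > 0"
proof -
  have "\<not> card A \<le> Suc 0" using assms(3) by simp
  then obtain a b where "a \<in> A" "b \<in> A" "a \<noteq> b"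
    unfolding card_le_Suc0_iff_eq[OF assms(2)] by blast
  hence "d a b > 0" using um_facts(4)[OF assms(1)] by blast
  also have "d a b \<le> diam A d" using diam_ge[OF assms(2) \<open>a\<in>A\<close> \<open>b\<in>A\<close>] by simp
  finally show ?thesis .
qed

lemma far_point:
  assumes "ultrametric A d" "finite A" "x \<in> A"
  shows "\<exists>y\<in>A. d x y = diam A d"
proof -
  obtain a b where ab: "a \<in> A" "b \<in> A" "diam A d = d a b"
    using diam_attained[OF assms(2)] assms(3) by blast
  have h: "d a b \<le> max (d a x) (d x b)" using um_tri[OF assms(1) ab(1) ab(2) assms(3)] .
  have h1: "d a x \<le> diam A d" using diam_ge[OF assms(2) ab(1) assms(3)] .
  have h2: "d x b \<le> diam A d" using diam_ge[OF assms(2) assms(3) ab(2)] .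
  have h3: "d x a = d a x" using um_facts(3)[OF assms(1) assms(3) ab(1)] .
  show ?thesis
  proof (cases "d a x \<le> d x b")
    case True
    hence "d a b \<le> d x b" using h by (simp add: max_def)
    hence "d x b = diam A d" using h2 ab(3) by linarith
    thus ?thesis using ab(2) by blast
  next
    case False
    hence "d a b \<le> d a x" using h by (simp add: max_def)
    hence "d x a = diam A d" using h1 h3 ab(3) by linarith
    thus ?thesis using ab(1) by blast
  qed
qed

definition cls :: "('a \<Rightarrow> 'a \<Rightarrow> real) \<Rightarrow> 'a set \<Rightarrow> 'a \<Rightarrow> 'a set" where
  "cls d A x = {y \<in> A. d x y < diam A d}"

lemma tchildren_cls: "card A \<ge> 2 \<Longrightarrow> tchildren d A = cls d A ` A"
  unfolding tchildren_def cls_def by auto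

lemma tchildren_small: "card A < 2 \<Longrightarrow> tchildren d A = {}"
  unfolding tchildren_def by auto

lemma child_sub: "K \<in> tchildren d A \<Longrightarrow> K \<subseteq> A"
  unfolding tchildren_def by (auto split: if_splits)

lemma cls_mem:
  assumes "ultrametric A d" "finite A" "card A \<ge> 2" "x \<in> A"
  shows "x \<in> cls d A x"
  using diam_pos[OF assms(1-3)] um_facts[OF assms(1)] assms(4) unfolding cls_def by auto

lemma cls_proper:
  assumes "ultrametric A d" "finite A" "x \<in> A"
  shows "cls d A x \<subset> A"
proof -
  obtain y where "y \<in> A" "d x y = diam A d" using far_point[OF assms] by blast
  hence "y \<notin> cls d A x" unfolding cls_def by auto
  thus ?thesis using \<open>y \<in> A\<close> unfolding cls_def by auto
qed

lemma cls_eq: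
  assumes "ultrametric A d" "finite A" "x \<in> A" "x' \<in> A" "z \<in> cls d A x" "z \<in> cls d A x'"
  shows "cls d A x = cls d A x'"
proof -
  have z: "z \<in> A" "d x z < diam A d" "d x' z < diam A d" using assms(5,6) unfolding cls_def by auto
  have xx: "d x x' < diam A d"
    using um_tri[OF assms(1) assms(3) assms(4) z(1)] um_facts(3)[OF assms(1) assms(4) z(1)] z by auto
  have "d x y < diam A d \<longleftrightarrow> d x' y < diam A d" if "y \<in> A" for y
  proof
    assume "d x y < diam A d"
    thus "d x' y < diam A d"
      using um_tri[OF assms(1) assms(4) that assms(3)] um_facts(3)[OF assms(1) assms(3) assms(4)] xx
      by auto
  next
    assume "d x' y < diam A d"
    thus "d x y < diam A d"
      using um_tri[OF assms(1) assms(3) that assms(4)] xx by auto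
  qed
  thus ?thesis unfolding cls_def by auto
qed

lemma children_disj:
  assumes "ultrametric A d" "finite A" "K \<in> tchildren d A" "K' \<in> tchildren d A" "K \<inter> K' \<noteq> {}"
  shows "K = K'"
proof -
  have c: "card A \<ge> 2" using assms(3) unfolding tchildren_def by (auto split: if_splits)
  obtain x x' where "x \<in> A" "x' \<in> A" "K = cls d A x" "K' = cls d A x'"
    using assms(3,4) tchildren_cls[OF c] by auto
  moreover obtain z where "z \<in> K" "z \<in> K'" using assms(5) by blast
  ultimately show ?thesis using cls_eq[OF assms(1,2), of x x' z] by simp
qed

lemma child_props:
  assumes "ultrametric A d" "finite A" "K \<in> tchildren d A"
  shows "K \<subset> A" "K \<noteq> {}"
proof -
  have c: "card A \<ge> 2" using assms(3) unfolding tchildren_def by (auto split: if_splits)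
  obtain x where "x \<in> A" "K = cls d A x" using assms(3) tchildren_cls[OF c] by auto
  thus "K \<subset> A" using cls_proper[OF assms(1,2)] by simp
  show "K \<noteq> {}" using cls_mem[OF assms(1,2) c \<open>x \<in> A\<close>] \<open>K = cls d A x\<close> by blast
qed

lemma children_nonempty:
  assumes "ultrametric A d" "finite A" "card A \<ge> 2"
  shows "tchildren d A \<noteq> {}"
  using tchildren_cls[OF assms(3)] assms(3) by auto

lemma finite_children: "finite A \<Longrightarrow> finite (tchildren d A)"
  by (cases "card A \<ge> 2") (simp_all add: tchildren_cls tchildren_small)

lemma tnodes_sub: "A \<in> tnodes X d \<Longrightarrow> A \<subseteq> X"
proof (induction rule: tnodes.induct)
  case root thus ?case by simp
next
  case (child A K) thus ?case using child_sub[OF child(2)] by blast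
qed

lemma tnodes_trans: "A \<in> tnodes C d \<Longrightarrow> C \<in> tnodes X d \<Longrightarrow> A \<in> tnodes X d"
proof (induction rule: tnodes.induct)
  case root thus ?case by simp
next
  case (child A K) thus ?case using tnodes.child[of A X d K] by blast
qed

lemma tnodes_ne:
  assumes "ultrametric X d" "finite X" "X \<noteq> {}" "A \<in> tnodes X d"
  shows "A \<noteq> {}"
  using assms(4)
proof (induction rule: tnodes.induct)
  case root thus ?case using assms by simp
next
  case (child A K)
  have "A \<subseteq> X" using child(1) tnodes_sub by blast
  hence "ultrametric A d" "finite A" using ultrametric_subset[OF assms(1)] finite_subset[OF _ assms(2)]
    by auto
  thus ?case using child_props(2)[OF _ _ child(2)] by blast
qed

lemma tnodes_unfold: "tnodes X d = insert X (\<Union>C\<in>tchildren d X. tnodes C d)"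
proof
  show "tnodes X d \<subseteq> insert X (\<Union>C\<in>tchildren d X. tnodes C d)"
  proof
    fix A assume "A \<in> tnodes X d"
    thus "A \<in> insert X (\<Union>C\<in>tchildren d X. tnodes C d)"
    proof (induction rule: tnodes.induct)
      case root thus ?case by simp
    next
      case (child A K)
      show ?case
      proof (cases "A = X")
        case True thus ?thesis using child(2) tnodes.root[of K d] by blast
      next
        case False
        then obtain C where "C \<in> tchildren d X" "A \<in> tnodes C d" using child(3) by blast
        thus ?thesis using tnodes.child[OF _ child(2), of C] by blast
      qed
    qed
  qed
next
  show "insert X (\<Union>C\<in>tchildren d X. tnodes C d) \<subseteq> tnodes X d"
  proof
    fix A assume "A \<in> insert X (\<Union>C\<in>tchildren d X. tnodes C d)"
    then consider "A = X" | C where "C \<in> tchildren d X" "A \<in> tnodes C d" by blast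
    thus "A \<in> tnodes X d"
    proof cases
      case 1 thus ?thesis by (simp add: tnodes.root)
    next
      case 2 thus ?thesis using tnodes_trans[OF 2(2) tnodes.child[OF tnodes.root 2(1)]] by simp
    qed
  qed
qed

lemma tnodes_psub:
  assumes "ultrametric X d" "finite X" "C \<in> tchildren d X" "A \<in> tnodes C d"
  shows "A \<subseteq> C" "A \<noteq> X" "A \<noteq> {}"
proof -
  show "A \<subseteq> C" using tnodes_sub assms(4) by blast
  thus "A \<noteq> X" using child_props(1)[OF assms(1-3)] by auto
  have "C \<subseteq> X" using child_sub assms(3) by blast
  hence "ultrametric C d" "finite C" using ultrametric_subset[OF assms(1)] finite_subset[OF _ assms(2)]
    by auto
  thus "A \<noteq> {}" using tnodes_ne[OF _ _ child_props(2)[OF assms(1-3)] assms(4)] by blast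
qed

datatype shape = Sh "shape multiset"

fun shp :: "nat \<Rightarrow> ('a \<Rightarrow> 'a \<Rightarrow> real) \<Rightarrow> 'a set \<Rightarrow> shape" where
  "shp 0 d A = Sh {#}"
| "shp (Suc n) d A = Sh (image_mset (shp n d) (mset_set (tchildren d A)))"

definition shape :: "('a \<Rightarrow> 'a \<Rightarrow> real) \<Rightarrow> 'a set \<Rightarrow> shape" where
  "shape d A = shp (card A) d A"

lemma shp_small: "card A < 2 \<Longrightarrow> shp n d A = Sh {#}"
  by (cases n) (auto simp: tchildren_small)

lemma shp_fuel:
  assumes "ultrametric A d" "finite A" "card A \<le> n" "card A \<le> m"
  shows "shp n d A = shp m d A"
  using assms
proof (induction "card A" arbitrary: A n m rule: less_induct)
  case less
  show ?case
  proof (cases "card A < 2")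
    case True thus ?thesis by (simp add: shp_small)
  next
    case False
    obtain n' where n': "n = Suc n'" using less.prems(3) False by (cases n) auto
    obtain m' where m': "m = Suc m'" using less.prems(4) False by (cases m) auto
    note nm = n' m'
    have H: "shp n' d C = shp m' d C" if "C \<in> tchildren d A" for C
    proof -
      have "C \<subset> A" using child_props(1)[OF less.prems(1,2) that] .
      hence "card C < card A" using psubset_card_mono less.prems(2) by blast
      moreover have "ultrametric C d" "finite C" using \<open>C \<subset> A\<close> less.prems(1,2)
        ultrametric_subset[of A d C] finite_subset[of C A] by auto
      ultimately show ?thesis by (intro less.hyps) (use less.prems(3,4) nm in auto)
    qed
    have fin: "finite (tchildren d A)" using finite_children less.prems(2) by blast
    have "image_mset (shp n' d) (mset_set (tchildren d A)) = image_mset (shp m' d) (mset_set (tchildren d A))"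
      by (rule image_mset_cong) (use fin H in auto)
    thus ?thesis using nm by simp
  qed
qed

lemma shape_unfold:
  assumes "ultrametric A d" "finite A"
  shows "shape d A = Sh (image_mset (shape d) (mset_set (tchildren d A)))"
proof (cases "card A < 2")
  case True thus ?thesis by (simp add: shape_def shp_small tchildren_small)
next
  case False
  then obtain k where k: "card A = Suc k" by (cases "card A") auto
  have H: "shp k d C = shape d C" if "C \<in> tchildren d A" for C
  proof -
    have "C \<subset> A" using child_props(1)[OF assms that] .
    hence "card C < card A" using psubset_card_mono assms(2) by blast
    moreover have "ultrametric C d" "finite C" using \<open>C \<subset> A\<close> assms
        ultrametric_subset[of A d C] finite_subset[of C A] by auto
    ultimately show ?thesis unfolding shape_def using shp_fuel[of C d k "card C"] k by auto
  qed
  have fin: "finite (tchildren d A)" using finite_children assms(2) by blast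
  have "image_mset (shp k d) (mset_set (tchildren d A)) = image_mset (shape d) (mset_set (tchildren d A))"
    by (rule image_mset_cong) (use fin H in auto)
  thus ?thesis unfolding shape_def k by simp
qed

definition isof :: "('a set \<Rightarrow> 'b set) \<Rightarrow> 'a set \<Rightarrow> ('a \<Rightarrow> 'a \<Rightarrow> real) \<Rightarrow> 'b set \<Rightarrow> ('b \<Rightarrow> 'b \<Rightarrow> real) \<Rightarrow> bool" where
  "isof f X d Y e \<longleftrightarrow> bij_betw f (tnodes X d) (tnodes Y e) \<and> f X = Y \<and>
     (\<forall>A\<in>tnodes X d. tchildren e (f A) = f ` tchildren d A)"

lemma tree_iso_alt: "tree_iso X d Y e \<longleftrightarrow> (\<exists>f. isof f X d Y e)"
proof
  assume "tree_iso X d Y e"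
  then obtain f where b: "bij_betw f (tnodes X d) (tnodes Y e)" and r: "f X = Y"
    and p: "\<forall>A\<in>tnodes X d. \<forall>K\<in>tnodes X d. K \<in> tchildren d A \<longleftrightarrow> f K \<in> tchildren e (f A)"
    unfolding tree_iso_def by (elim exE conjE) (rule that)
  have "tchildren e (f A) = f ` tchildren d A" if A: "A \<in> tnodes X d" for A
  proof
    show "f ` tchildren d A \<subseteq> tchildren e (f A)"
    proof
      fix K' assume "K' \<in> f ` tchildren d A"
      then obtain K where K: "K \<in> tchildren d A" "K' = f K" by blast
      have "K \<in> tnodes X d" using tnodes.child[OF A K(1)] .
      thus "K' \<in> tchildren e (f A)" using p A K by simp
    qed
  next
    show "tchildren e (f A) \<subseteq> f ` tchildren d A"
    proof
      fix K' assume K': "K' \<in> tchildren e (f A)"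
      have "f A \<in> tnodes Y e" using bij_betw_apply[OF b A] .
      hence "K' \<in> tnodes Y e" using tnodes.child[OF _ K'] by simp
      moreover have "f ` tnodes X d = tnodes Y e" using bij_betw_imp_surj_on[OF b] .
      ultimately obtain K where K: "K \<in> tnodes X d" "K' = f K" by blast
      hence "K \<in> tchildren d A" using p A K' K(2) by simp
      thus "K' \<in> f ` tchildren d A" using K by blast
    qed
  qed
  hence "isof f X d Y e" unfolding isof_def using b r by simp
  thus "\<exists>f. isof f X d Y e" by blast
next
  assume "\<exists>f. isof f X d Y e"
  then obtain f where b: "bij_betw f (tnodes X d) (tnodes Y e)" and r: "f X = Y"
    and p: "\<forall>A\<in>tnodes X d. tchildren e (f A) = f ` tchildren d A"
    unfolding isof_def by (elim exE conjE) (rule that)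
  have i: "inj_on f (tnodes X d)" using bij_betw_imp_inj_on[OF b] .
  have "K \<in> tchildren d A \<longleftrightarrow> f K \<in> tchildren e (f A)" if "A \<in> tnodes X d" "K \<in> tnodes X d" for A K
  proof -
    have sub: "tchildren d A \<subseteq> tnodes X d" using tnodes.child[OF that(1)] by blast
    have "f K \<in> f ` tchildren d A \<longleftrightarrow> K \<in> tchildren d A"
      using inj_on_image_mem_iff[OF i that(2) sub] .
    thus ?thesis using p that(1) by simp
  qed
  hence "\<forall>A\<in>tnodes X d. \<forall>K\<in>tnodes X d. K \<in> tchildren d A \<longleftrightarrow> f K \<in> tchildren e (f A)" by blast
  thus "tree_iso X d Y e" unfolding tree_iso_def using b r by (intro exI[of _ f]) simp
qed

lemma isof_restrict:
  assumes f: "isof f X d Y e" and C: "C \<in> tnodes X d"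
  shows "isof f C d (f C) e"
proof -
  have b: "bij_betw f (tnodes X d) (tnodes Y e)" and p: "\<forall>A\<in>tnodes X d. tchildren e (f A) = f ` tchildren d A"
    using f unfolding isof_def by auto
  have sub: "tnodes C d \<subseteq> tnodes X d" using tnodes_trans[OF _ C] by blast
  have "f A \<in> tnodes (f C) e" if "A \<in> tnodes C d" for A
    using that
  proof (induction rule: tnodes.induct)
    case root thus ?case by (rule tnodes.root)
  next
    case (child A K)
    have "A \<in> tnodes X d" using child(1) sub by blast
    hence "f K \<in> tchildren e (f A)" using p child(2) by blast
    thus ?case using tnodes.child[OF child(3)] by blast
  qed
  moreover have "A' \<in> f ` tnodes C d" if "A' \<in> tnodes (f C) e" for A'
    using that
  proof (induction rule: tnodes.induct)
    case root thus ?case using tnodes.root[of C d] by blast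
  next
    case (child A' K')
    then obtain A where A: "A \<in> tnodes C d" "A' = f A" by blast
    have "A \<in> tnodes X d" using A(1) sub by blast
    hence "K' \<in> f ` tchildren d A" using p child(2) A(2) by blast
    then obtain K where "K \<in> tchildren d A" "K' = f K" by blast
    thus ?case using tnodes.child[OF A(1)] by blast
  qed
  ultimately have "f ` tnodes C d = tnodes (f C) e" by blast
  moreover have "inj_on f (tnodes C d)" using inj_on_subset[OF bij_betw_imp_inj_on[OF b] sub] .
  ultimately have "bij_betw f (tnodes C d) (tnodes (f C) e)" unfolding bij_betw_def by simp
  moreover have "\<forall>A\<in>tnodes C d. tchildren e (f A) = f ` tchildren d A" using p sub by blast
  ultimately show ?thesis unfolding isof_def by simp
qed

lemma iso_shape:
  assumes "isof f X d Y e" "ultrametric X d" "finite X" "ultrametric Y e" "finite Y"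
  shows "shape d X = shape e Y"
  using assms
proof (induction "card X" arbitrary: X Y f rule: less_induct)
  case less
  have b: "bij_betw f (tnodes X d) (tnodes Y e)" and r: "f X = Y"
    and p: "\<forall>A\<in>tnodes X d. tchildren e (f A) = f ` tchildren d A"
    using less.prems(1) unfolding isof_def by auto
  have chY: "tchildren e Y = f ` tchildren d X" using p tnodes.root[of X d] r by metis
  have subch: "tchildren d X \<subseteq> tnodes X d" using tnodes.child[OF tnodes.root[of X d]] by blast
  have inj: "inj_on f (tchildren d X)" using inj_on_subset[OF bij_betw_imp_inj_on[OF b] subch] .
  have IH: "shape e (f C) = shape d C" if C: "C \<in> tchildren d X" for C
  proof -
    have CX: "C \<subset> X" using child_props(1)[OF less.prems(2,3) C] .
    hence c: "card C < card X" using psubset_card_mono less.prems(3) by blast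
    have uC: "ultrametric C d" "finite C" using CX less.prems(2,3)
      ultrametric_subset[of X d C] finite_subset[of C X] by auto
    have fCY: "f C \<in> tnodes Y e" using bij_betw_apply[OF b] C subch by blast
    hence "f C \<subseteq> Y" using tnodes_sub[OF fCY] by simp
    hence uFC: "ultrametric (f C) e" "finite (f C)" using less.prems(4,5)
      ultrametric_subset[of Y e "f C"] finite_subset[of "f C" Y] by auto
    have "isof f C d (f C) e" using isof_restrict[OF less.prems(1)] C subch by blast
    from less.hyps[OF c this uC uFC] show ?thesis by simp
  qed
  have fin: "finite (tchildren d X)" using finite_children less.prems(3) by blast
  have "mset_set (tchildren e Y) = image_mset f (mset_set (tchildren d X))"
    using image_mset_mset_set[OF inj] chY by simp
  hence "image_mset (shape e) (mset_set (tchildren e Y)) = image_mset (\<lambda>C. shape e (f C)) (mset_set (tchildren d X))"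
    by (simp add: multiset.map_comp comp_def)
  also have "\<dots> = image_mset (shape d) (mset_set (tchildren d X))"
    by (rule image_mset_cong) (use fin IH in auto)
  finally show ?case
    using shape_unfold[OF less.prems(2,3)] shape_unfold[OF less.prems(4,5)] by simp
qed

lemma mset_bij:
  assumes "finite A" "finite Bs" "image_mset f (mset_set A) = image_mset g (mset_set Bs)"
  shows "\<exists>h. bij_betw h A Bs \<and> (\<forall>a\<in>A. g (h a) = f a)"
  using assms
proof (induction A arbitrary: Bs rule: finite_induct)
  case empty
  have "mset_set Bs = {#}" using empty.prems(2) by (metis image_mset_is_empty_iff mset_set.empty)
  hence "Bs = {}" using mset_set_empty_iff[of Bs] empty.prems(1) by simp
  thus ?case by (simp add: bij_betw_def)
next
  case (insert a A)
  have "image_mset f (mset_set (insert a A)) = add_mset (f a) (image_mset f (mset_set A))"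
    using insert.hyps by simp
  hence "f a \<in># image_mset g (mset_set Bs)" using insert.prems(2) by simp
  hence "f a \<in> g ` set_mset (mset_set Bs)" by (simp only: set_image_mset)
  hence "f a \<in> g ` Bs" using insert.prems(1) by (simp only: finite_set_mset_mset_set)
  then obtain b where bB: "b \<in> Bs" and b2: "g b = f a" by (elim imageE) simp
  have ins: "insert b (Bs - {b}) = Bs" using bB by blast
  have "mset_set (insert b (Bs - {b})) = add_mset b (mset_set (Bs - {b}))"
    by (rule mset_set.insert) (use insert.prems(1) in auto)
  hence mB: "mset_set Bs = add_mset b (mset_set (Bs - {b}))" using ins by simp
  have "add_mset (f a) (image_mset f (mset_set A)) = add_mset (f a) (image_mset g (mset_set (Bs - {b})))"
    using insert.prems(2) insert.hyps mB b2 by simp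
  hence "image_mset f (mset_set A) = image_mset g (mset_set (Bs - {b}))" by simp
  then obtain h where h: "bij_betw h A (Bs - {b})" "\<forall>x\<in>A. g (h x) = f x"
    using insert.IH[of "Bs - {b}"] insert.prems(1) by blast
  have h2: "bij_betw h A (Bs - {b})" using h(1) .
  have "bij_betw (h(a := b)) A (Bs - {b}) = bij_betw h A (Bs - {b})"
    by (rule bij_betw_cong) (use insert.hyps(2) in auto)
  hence "bij_betw (h(a := b)) A (Bs - {b})" using h2 by simp
  hence "bij_betw (h(a := b)) (A \<union> {a}) ((Bs - {b}) \<union> {(h(a := b)) a})"
    by (intro notIn_Un_bij_betw) (use insert.hyps(2) in auto)
  hence "bij_betw (h(a := b)) (insert a A) Bs" using ins by (simp add: insert_commute)
  moreover have "\<forall>x\<in>insert a A. g ((h(a := b)) x) = f x" using h(2) b2 insert.hyps(2) by auto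
  ultimately show ?case by blast
qed

lemma glue:
  assumes uX: "ultrametric X d" "finite X" and uY: "ultrametric Y e" "finite Y"
    and g: "bij_betw g (tchildren d X) (tchildren e Y)"
    and fc: "\<And>C. C \<in> tchildren d X \<Longrightarrow> isof (fc C) C d (g C) e"
  shows "\<exists>F. isof F X d Y e"
proof -
  define F where "F A = (if A = X then Y else fc (THE C. C \<in> tchildren d X \<and> A \<in> tnodes C d) A)" for A
  have uniq: "(THE C'. C' \<in> tchildren d X \<and> A \<in> tnodes C' d) = C"
    if C: "C \<in> tchildren d X" "A \<in> tnodes C d" for C A
  proof (rule the1_equality)
    show "C \<in> tchildren d X \<and> A \<in> tnodes C d" using C by simp
    show "\<exists>!C'. C' \<in> tchildren d X \<and> A \<in> tnodes C' d"
    proof (rule ex1I[of _ C])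
      show "C \<in> tchildren d X \<and> A \<in> tnodes C d" using C by simp
    next
      fix C' assume C': "C' \<in> tchildren d X \<and> A \<in> tnodes C' d"
      have "A \<subseteq> C" "A \<noteq> {}" using tnodes_psub[OF uX C] by auto
      moreover have "A \<subseteq> C'" using tnodes_psub[OF uX] C' by blast
      ultimately have "C' \<inter> C \<noteq> {}" by blast
      thus "C' = C" using children_disj[OF uX] C' C(1) by blast
    qed
  qed
  have FC: "F A = fc C A" if "C \<in> tchildren d X" "A \<in> tnodes C d" for C A
    using uniq[OF that] tnodes_psub(2)[OF uX that] unfolding F_def by simp
  have FX: "F X = Y" unfolding F_def by simp
  have iC: "bij_betw (fc C) (tnodes C d) (tnodes (g C) e)" "fc C C = g C"
    "\<forall>A\<in>tnodes C d. tchildren e (fc C A) = fc C ` tchildren d A"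
    if "C \<in> tchildren d X" for C using fc[OF that] unfolding isof_def by auto
  have gC: "g C \<in> tchildren e Y" if "C \<in> tchildren d X" for C using bij_betw_apply[OF g that] .
  have Xu: "tnodes X d = insert X (\<Union>C\<in>tchildren d X. tnodes C d)" by (rule tnodes_unfold)
  have Yu: "tnodes Y e = insert Y (\<Union>C\<in>tchildren e Y. tnodes C e)" by (rule tnodes_unfold)
  have inY: "F A \<in> tnodes (g C) e" if "C \<in> tchildren d X" "A \<in> tnodes C d" for C A
    using FC[OF that] bij_betw_apply[OF iC(1)[OF that(1)] that(2)] by simp
  have inj: "inj_on F (tnodes X d)"
  proof (rule inj_onI)
    fix A1 A2 assume A1: "A1 \<in> tnodes X d" and A2: "A2 \<in> tnodes X d" and eq: "F A1 = F A2"
    show "A1 = A2"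
    proof (cases "A1 = X")
      case True
      show ?thesis
      proof (rule ccontr)
        assume "A1 \<noteq> A2"
        then obtain C where C: "C \<in> tchildren d X" "A2 \<in> tnodes C d" using A2 Xu True by blast
        have "F A2 \<noteq> Y" using tnodes_psub(2)[OF uY gC[OF C(1)] inY[OF C]] .
        thus False using eq True FX by simp
      qed
    next
      case False
      then obtain C1 where C1: "C1 \<in> tchildren d X" "A1 \<in> tnodes C1 d" using A1 Xu by blast
      have n1: "F A1 \<noteq> Y" using tnodes_psub(2)[OF uY gC[OF C1(1)] inY[OF C1]] .
      hence "A2 \<noteq> X" using eq FX by auto
      then obtain C2 where C2: "C2 \<in> tchildren d X" "A2 \<in> tnodes C2 d" using A2 Xu by blast
      have s1: "F A1 \<subseteq> g C1" "F A1 \<noteq> {}" using tnodes_psub[OF uY gC[OF C1(1)] inY[OF C1]] by auto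
      have s2: "F A2 \<subseteq> g C2" using tnodes_psub[OF uY gC[OF C2(1)] inY[OF C2]] by auto
      have "g C1 \<inter> g C2 \<noteq> {}" using s1 s2 eq by blast
      hence "g C1 = g C2" using children_disj[OF uY gC[OF C1(1)] gC[OF C2(1)]] by blast
      hence "C1 = C2" using bij_betw_imp_inj_on[OF g] C1(1) C2(1) inj_on_eq_iff by metis
      hence "fc C1 A1 = fc C1 A2" using eq FC[OF C1] FC[OF C2] by simp
      thus ?thesis using bij_betw_imp_inj_on[OF iC(1)[OF C1(1)]] C1(2) C2(2) \<open>C1 = C2\<close>
        inj_on_eq_iff by metis
    qed
  qed
  have img: "F ` tnodes X d = tnodes Y e"
  proof
    show "F ` tnodes X d \<subseteq> tnodes Y e"
    proof
      fix A' assume "A' \<in> F ` tnodes X d"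
      then obtain A where A: "A \<in> tnodes X d" "A' = F A" by blast
      show "A' \<in> tnodes Y e"
      proof (cases "A = X")
        case True thus ?thesis using A(2) FX tnodes.root[of Y e] by simp
      next
        case False
        then obtain C where C: "C \<in> tchildren d X" "A \<in> tnodes C d" using A(1) Xu by blast
        thus ?thesis using inY[OF C] gC[OF C(1)] Yu A(2) by blast
      qed
    qed
  next
    show "tnodes Y e \<subseteq> F ` tnodes X d"
    proof
      fix A' assume A': "A' \<in> tnodes Y e"
      show "A' \<in> F ` tnodes X d"
      proof (cases "A' = Y")
        case True thus ?thesis using FX tnodes.root[of X d] by force
      next
        case False
        then obtain C' where C': "C' \<in> tchildren e Y" "A' \<in> tnodes C' e" using A' Yu by blast
        then obtain C where C: "C \<in> tchildren d X" "C' = g C"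
          using bij_betw_imp_surj_on[OF g] by blast
        then obtain A where A: "A \<in> tnodes C d" "A' = fc C A"
          using bij_betw_imp_surj_on[OF iC(1)[OF C(1)]] C' by blast
        have "A \<in> tnodes X d" using Xu C(1) A(1) by blast
        moreover have "F A = A'" using FC[OF C(1) A(1)] A(2) by simp
        ultimately show ?thesis by blast
      qed
    qed
  qed
  have pres: "tchildren e (F A) = F ` tchildren d A" if A: "A \<in> tnodes X d" for A
  proof (cases "A = X")
    case True
    have "F ` tchildren d X = g ` tchildren d X"
    proof (rule image_cong[OF refl])
      fix C assume C: "C \<in> tchildren d X"
      show "F C = g C" using FC[OF C tnodes.root[of C d]] iC(2)[OF C] by simp
    qed
    thus ?thesis using True FX bij_betw_imp_surj_on[OF g] by simp
  next
    case False
    then obtain C where C: "C \<in> tchildren d X" "A \<in> tnodes C d" using A Xu by blast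
    have "F ` tchildren d A = fc C ` tchildren d A"
    proof (rule image_cong[OF refl])
      fix K assume "K \<in> tchildren d A"
      hence "K \<in> tnodes C d" using tnodes.child[OF C(2)] by simp
      thus "F K = fc C K" using FC[OF C(1)] by simp
    qed
    thus ?thesis using FC[OF C] iC(3)[OF C(1)] C(2) by simp
  qed
  have "isof F X d Y e" unfolding isof_def bij_betw_def using inj img FX pres by simp
  thus ?thesis by blast
qed

lemma shape_iso:
  assumes "ultrametric X d" "finite X" "ultrametric Y e" "finite Y" "shape d X = shape e Y"
  shows "\<exists>f. isof f X d Y e"
  using assms
proof (induction "card X" arbitrary: X Y rule: less_induct)
  case less
  have fX: "finite (tchildren d X)" using finite_children less.prems(2) by blast
  have fY: "finite (tchildren e Y)" using finite_children less.prems(4) by blast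
  have "image_mset (shape d) (mset_set (tchildren d X)) = image_mset (shape e) (mset_set (tchildren e Y))"
    using less.prems(5) shape_unfold[OF less.prems(1,2)] shape_unfold[OF less.prems(3,4)] by simp
  then obtain g where g: "bij_betw g (tchildren d X) (tchildren e Y)"
    "\<forall>C\<in>tchildren d X. shape e (g C) = shape d C"
    using mset_bij[OF fX fY] by blast
  have "\<exists>f. isof f C d (g C) e" if C: "C \<in> tchildren d X" for C
  proof -
    have CX: "C \<subset> X" using child_props(1)[OF less.prems(1,2) C] .
    hence c: "card C < card X" using psubset_card_mono less.prems(2) by blast
    have uC: "ultrametric C d" "finite C" using CX less.prems(1,2)
      ultrametric_subset[of X d C] finite_subset[of C X] by auto
    have gC: "g C \<in> tchildren e Y" using bij_betw_apply[OF g(1) C] .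
    hence "g C \<subseteq> Y" using child_sub by blast
    hence uG: "ultrametric (g C) e" "finite (g C)" using less.prems(3,4)
      ultrametric_subset[of Y e "g C"] finite_subset[of "g C" Y] by auto
    have "shape d C = shape e (g C)" using g(2) C by simp
    from less.hyps[OF c uC uG this] show ?thesis .
  qed
  then obtain fc where "\<forall>C\<in>tchildren d X. isof (fc C) C d (g C) e" by metis
  thus ?case using glue[OF less.prems(1-4) g(1)] by blast
qed

lemma tree_iso_shape:
  assumes "ultrametric X d" "finite X" "ultrametric Y e" "finite Y"
  shows "tree_iso X d Y e \<longleftrightarrow> shape d X = shape e Y"
  using tree_iso_alt iso_shape[OF _ assms] shape_iso[OF assms] by blast

lemma finite_Sp: "finite A \<Longrightarrow> finite (Sp A d)"
proof -
  assume "finite A"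
  have "Sp A d \<subseteq> (\<lambda>(x,y). d x y) ` (A \<times> A)" unfolding Sp_def by auto
  thus ?thesis using \<open>finite A\<close> finite_subset by blast
qed

lemma part:
  assumes u: "ultrametric A d" "finite A" "card A \<ge> 2"
  shows "\<Union>(tchildren d A) = A" "pairwise disjnt (tchildren d A)" "card (tchildren d A) \<ge> 2"
    "sum card (tchildren d A) = card A"
    "\<And>C. C \<in> tchildren d A \<Longrightarrow> ultrametric C d \<and> finite C \<and> C \<noteq> {} \<and> card C < card A"
proof -
  have ch: "tchildren d A = cls d A ` A" using tchildren_cls[OF u(3)] .
  show U: "\<Union>(tchildren d A) = A"
  proof
    show "\<Union>(tchildren d A) \<subseteq> A" using child_sub by blast
    show "A \<subseteq> \<Union>(tchildren d A)"
    proof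
      fix x assume "x \<in> A"
      hence "x \<in> cls d A x" "cls d A x \<in> tchildren d A" using cls_mem[OF u] ch by auto
      thus "x \<in> \<Union>(tchildren d A)" by blast
    qed
  qed
  show P: "pairwise disjnt (tchildren d A)"
    unfolding pairwise_def disjnt_def using children_disj[OF u(1,2)] by blast
  show C: "ultrametric C d \<and> finite C \<and> C \<noteq> {} \<and> card C < card A" if "C \<in> tchildren d A" for C
  proof -
    have "C \<subset> A" "C \<noteq> {}" using child_props[OF u(1,2) that] by auto
    thus ?thesis using u ultrametric_subset[of A d C] finite_subset[of C A] psubset_card_mono[of A C]
      by auto
  qed
  have fin: "finite (tchildren d A)" using finite_children u(2) by blast
  show "sum card (tchildren d A) = card A"
    using card_Union_disjoint[OF P] C U by simp
  obtain a b where ab: "a \<in> A" "b \<in> A" "diam A d = d a b" using diam_attained[OF u(2)] u(3) by fastforce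
  have "b \<notin> cls d A a" using ab unfolding cls_def by simp
  moreover have "b \<in> cls d A b" using cls_mem[OF u ab(2)] .
  ultimately have ne: "cls d A a \<noteq> cls d A b" by blast
  have sub: "{cls d A a, cls d A b} \<subseteq> tchildren d A" using ch ab by blast
  have "card {cls d A a, cls d A b} = 2" using ne by simp
  thus "card (tchildren d A) \<ge> 2" using card_mono[OF fin sub] by simp
qed

lemma sp_sub:
  assumes u: "ultrametric A d" "finite A" "card A \<ge> 2"
  shows "Sp A d \<subseteq> insert (diam A d) (\<Union>C\<in>tchildren d A. Sp C d)"
proof
  fix r assume "r \<in> Sp A d"
  then obtain x y where xy: "x \<in> A" "y \<in> A" "x \<noteq> y" "r = d x y" unfolding Sp_def by blast
  show "r \<in> insert (diam A d) (\<Union>C\<in>tchildren d A. Sp C d)"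
  proof (cases "y \<in> cls d A x")
    case True
    have C: "cls d A x \<in> tchildren d A" using tchildren_cls[OF u(3)] xy(1) by blast
    have "x \<in> cls d A x" using cls_mem[OF u xy(1)] .
    hence "r \<in> Sp (cls d A x) d" unfolding Sp_def using True xy(3,4) by blast
    thus ?thesis using C by blast
  next
    case False
    hence "\<not> d x y < diam A d" using xy(2) unfolding cls_def by simp
    moreover have "d x y \<le> diam A d" using diam_ge[OF u(2) xy(1,2)] .
    ultimately show ?thesis using xy(4) by simp
  qed
qed

lemma sp_card_le:
  assumes u: "ultrametric A d" "finite A" "card A \<ge> 2"
  shows "card (Sp A d) \<le> Suc (\<Sum>C\<in>tchildren d A. card (Sp C d))"
proof -
  have fin: "finite (tchildren d A)" using finite_children u(2) by blast
  have fU: "finite (\<Union>C\<in>tchildren d A. Sp C d)" using fin part(5)[OF u] finite_Sp by blast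
  have "card (Sp A d) \<le> card (insert (diam A d) (\<Union>C\<in>tchildren d A. Sp C d))"
    using card_mono[OF _ sp_sub[OF u]] fU by simp
  also have "\<dots> \<le> Suc (card (\<Union>C\<in>tchildren d A. Sp C d))" using card_insert_le_m1 
    by (simp add: card_insert_if fU)
  also have "\<dots> \<le> Suc (\<Sum>C\<in>tchildren d A. card (Sp C d))" using card_UN_le[OF fin] by simp
  finally show ?thesis .
qed

lemma sp_bound:
  assumes "ultrametric A d" "finite A" "A \<noteq> {}"
  shows "card (Sp A d) + 1 \<le> card A"
  using assms
proof (induction "card A" arbitrary: A rule: less_induct)
  case less
  show ?case
  proof (cases "card A \<ge> 2")
    case False
    hence "card A \<le> Suc 0" by simp
    hence "\<forall>x\<in>A. \<forall>y\<in>A. x = y" using card_le_Suc0_iff_eq[OF less.prems(2)] by simp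
    hence "Sp A d = {}" unfolding Sp_def by blast
    thus ?thesis using less.prems(2,3) card_gt_0_iff[of A] by simp
  next
    case True
    note u = less.prems(1,2) True
    have fin: "finite (tchildren d A)" using finite_children u(2) by blast
    have "(\<Sum>C\<in>tchildren d A. card (Sp C d) + 1) \<le> (\<Sum>C\<in>tchildren d A. card C)"
    proof (rule sum_mono)
      fix C assume C: "C \<in> tchildren d A"
      show "card (Sp C d) + 1 \<le> card C" using less.hyps part(5)[OF u C] by blast
    qed
    hence "(\<Sum>C\<in>tchildren d A. card (Sp C d)) + card (tchildren d A) \<le> card A"
      using part(4)[OF u] by (simp add: sum.distrib sum_Suc)
    thus ?thesis using sp_card_le[OF u] part(3)[OF u] by linarith
  qed
qed

lemma U_split:
  assumes U: "in_U A d" and c: "card A \<ge> 2"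
  shows "\<exists>A1 A2. tchildren d A = {A1, A2} \<and> A1 \<noteq> A2 \<and> in_U A1 d \<and> in_U A2 d \<and>
           card A1 + card A2 = card A \<and> card A1 < card A \<and> card A2 < card A"
proof -
  have u: "ultrametric A d" "finite A" "card A \<ge> 2" "A \<noteq> {}" and sp: "card (Sp A d) = card A - 1"
    using U c unfolding in_U_def by auto
  have fin: "finite (tchildren d A)" using finite_children u(2) by blast
  define S where "S = (\<Sum>C\<in>tchildren d A. card (Sp C d))"
  define m where "m = card (tchildren d A)"
  have le: "card (Sp C d) + 1 \<le> card C" if C: "C \<in> tchildren d A" for C
    using sp_bound part(5)[OF u(1-3) C] by blast
  have "(\<Sum>C\<in>tchildren d A. card (Sp C d) + 1) \<le> (\<Sum>C\<in>tchildren d A. card C)"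
    by (rule sum_mono) (rule le)
  hence sm: "S + m \<le> card A" using part(4)[OF u(1-3)] unfolding S_def m_def by (simp add: sum.distrib sum_Suc)
  have s1: "card A - 1 \<le> Suc S" using sp_card_le[OF u(1-3)] sp unfolding S_def by simp
  have m2: "m = 2" using sm s1 part(3)[OF u(1-3)] u(3) unfolding m_def by linarith
  have eqC: "card (Sp C d) + 1 = card C" if C: "C \<in> tchildren d A" for C
  proof (rule ccontr)
    assume "card (Sp C d) + 1 \<noteq> card C"
    hence "card (Sp C d) + 1 < card C" using le[OF C] by simp
    hence "(\<Sum>C\<in>tchildren d A. card (Sp C d) + 1) < (\<Sum>C\<in>tchildren d A. card C)"
      using sum_strict_mono_ex1[OF fin, of "\<lambda>C. card (Sp C d) + 1" card] le C by blast
    hence "S + m < card A" using part(4)[OF u(1-3)] unfolding S_def m_def by (simp add: sum.distrib sum_Suc)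
    thus False using s1 m2 u(3) by linarith
  qed
  obtain A1 A2 where A12: "tchildren d A = {A1, A2}" "A1 \<noteq> A2"
    using m2 unfolding m_def card_2_iff by blast
  have inU: "in_U C d" if C: "C \<in> tchildren d A" for C
    using part(5)[OF u(1-3) C] eqC[OF C] unfolding in_U_def by auto
  have "card A1 + card A2 = card A" using part(4)[OF u(1-3)] A12 by simp
  moreover have m1: "A1 \<in> tchildren d A" "A2 \<in> tchildren d A" using A12 by auto
  moreover have "in_U A1 d" "in_U A2 d" using inU m1 by auto
  moreover have "card A1 < card A" "card A2 < card A" using part(5)[OF u(1-3)] m1 by auto
  ultimately show ?thesis using A12 by (intro exI[of _ A1] exI[of _ A2]) simp
qed

inductive bin :: "shape \<Rightarrow> nat \<Rightarrow> bool" where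
  leaf: "bin (Sh {#}) 1"
| node: "bin a p \<Longrightarrow> bin b q \<Longrightarrow> bin (Sh {#a, b#}) (p + q)"

lemma shape_pair:
  assumes "ultrametric A d" "finite A" "tchildren d A = {A1, A2}" "A1 \<noteq> A2"
  shows "shape d A = Sh {#shape d A1, shape d A2#}"
  using shape_unfold[OF assms(1,2)] assms(3,4) by simp

lemma U_bin:
  assumes "in_U A d"
  shows "bin (shape d A) (card A)"
  using assms
proof (induction "card A" arbitrary: A rule: less_induct)
  case less
  have u: "ultrametric A d" "finite A" "A \<noteq> {}" using less.prems unfolding in_U_def by auto
  show ?case
  proof (cases "card A \<ge> 2")
    case False
    hence "card A = 1" using u(2,3) card_gt_0_iff[of A] by linarith
    moreover have "shape d A = Sh {#}" using shape_unfold[OF u(1,2)] tchildren_small[of A d] False by simp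
    ultimately show ?thesis using bin.leaf by simp
  next
    case True
    obtain A1 A2 where A: "tchildren d A = {A1, A2}" "A1 \<noteq> A2" "in_U A1 d" "in_U A2 d"
      "card A1 + card A2 = card A" "card A1 < card A" "card A2 < card A"
      using U_split[OF less.prems True] by blast
    have "bin (shape d A1) (card A1)" "bin (shape d A2) (card A2)"
      using less.hyps A(3-7) by blast+
    hence "bin (Sh {#shape d A1, shape d A2#}) (card A)" using bin.node A(5) by metis
    thus ?thesis using shape_pair[OF u(1,2) A(1,2)] by simp
  qed
qed

lemma sim_diam:
  assumes A: "finite A" and ord: "\<forall>x\<in>A. \<forall>y\<in>A. \<forall>u\<in>A. \<forall>v\<in>A. d x y < d u v \<longleftrightarrow> e (g x) (g y) < e (g u) (g v)"
    and C: "C \<subseteq> A" "C \<noteq> {}" and xy: "x \<in> C" "y \<in> C"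
  shows "e (g x) (g y) < diam (g ` C) e \<longleftrightarrow> d x y < diam C d"
proof -
  have fC: "finite C" using A C(1) finite_subset by blast
  obtain a b where ab: "a \<in> C" "b \<in> C" "diam C d = d a b" using diam_attained[OF fC C(2)] by blast
  obtain a' b' where ab': "a' \<in> g ` C" "b' \<in> g ` C" "diam (g ` C) e = e a' b'"
    using diam_attained[of "g ` C" e] fC C(2) by blast
  obtain a0 b0 where a0: "a0 \<in> C" "a' = g a0" "b0 \<in> C" "b' = g b0" using ab'(1,2) by blast
  have o: "d p q < d u v \<longleftrightarrow> e (g p) (g q) < e (g u) (g v)" if "p \<in> C" "q \<in> C" "u \<in> C" "v \<in> C" for p q u v
    using ord that C(1) by blast
  have "d a0 b0 \<le> d a b" using diam_ge[OF fC a0(1) a0(3), where d=d] ab(3) by simp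
  hence "\<not> e (g a) (g b) < e (g a0) (g b0)" using o[OF ab(1,2) a0(1) a0(3)] by simp
  moreover have "e (g a) (g b) \<le> e (g a0) (g b0)"
    using diam_ge[of "g ` C" "g a" "g b" e] fC ab(1,2) ab'(3) a0(2,4) by simp
  ultimately have "diam (g ` C) e = e (g a) (g b)" using ab'(3) a0(2,4) by simp
  thus ?thesis using ab(3) o[OF xy ab(1,2)] by simp
qed

lemma sim_children:
  assumes A: "finite A" "inj_on g A" and ord: "\<forall>x\<in>A. \<forall>y\<in>A. \<forall>u\<in>A. \<forall>v\<in>A. d x y < d u v \<longleftrightarrow> e (g x) (g y) < e (g u) (g v)"
    and C: "C \<subseteq> A"
  shows "tchildren e (g ` C) = image g ` tchildren d C"
proof (cases "C = {}")
  case True thus ?thesis by (simp add: tchildren_small)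
next
  case False
  have ic: "inj_on g C" using A(2) C inj_on_subset by blast
  have cc: "card (g ` C) = card C" using card_image[OF ic] .
  show ?thesis
  proof (cases "card C \<ge> 2")
    case False thus ?thesis using cc by (simp add: tchildren_small)
  next
    case True
    have "cls e (g ` C) (g x) = g ` cls d C x" if x: "x \<in> C" for x
    proof -
      have "cls e (g ` C) (g x) = {y' \<in> g ` C. e (g x) y' < diam (g ` C) e}" unfolding cls_def ..
      also have "\<dots> = g ` {y \<in> C. e (g x) (g y) < diam (g ` C) e}" by blast
      also have "\<dots> = g ` {y \<in> C. d x y < diam C d}"
        using sim_diam[where d=d and e=e and g=g, OF A(1) ord C False x] by auto
      finally show ?thesis unfolding cls_def .
    qed
    hence "cls e (g ` C) ` (g ` C) = image g ` (cls d C ` C)" by (simp add: image_image)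
    thus ?thesis using tchildren_cls True cc by metis
  qed
qed

lemma sim_shp:
  assumes A: "finite A" "inj_on g A" and ord: "\<forall>x\<in>A. \<forall>y\<in>A. \<forall>u\<in>A. \<forall>v\<in>A. d x y < d u v \<longleftrightarrow> e (g x) (g y) < e (g u) (g v)"
  shows "C \<subseteq> A \<Longrightarrow> shp n e (g ` C) = shp n d C"
proof (induction n arbitrary: C)
  case 0 thus ?case by simp
next
  case (Suc n)
  have ch: "tchildren e (g ` C) = image g ` tchildren d C" using sim_children[where d=d and e=e and g=g, OF A ord Suc.prems] .
  have sub: "tchildren d C \<subseteq> Pow A" using child_sub Suc.prems by blast
  have inj: "inj_on (image g) (tchildren d C)" using inj_on_subset[OF inj_on_image_Pow[OF A(2)] sub] .
  have fin: "finite (tchildren d C)" using finite_children finite_subset[OF Suc.prems A(1)] by blast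
  have "mset_set (tchildren e (g ` C)) = image_mset (image g) (mset_set (tchildren d C))"
    using image_mset_mset_set[OF inj] ch by simp
  hence "image_mset (shp n e) (mset_set (tchildren e (g ` C))) =
         image_mset (\<lambda>K. shp n e (g ` K)) (mset_set (tchildren d C))"
    by (simp add: multiset.map_comp comp_def)
  also have "\<dots> = image_mset (shp n d) (mset_set (tchildren d C))"
  proof (rule image_mset_cong)
    fix K assume "K \<in># mset_set (tchildren d C)"
    hence "K \<in> tchildren d C" using fin by simp
    hence "K \<subseteq> A" using sub by blast
    thus "shp n e (g ` K) = shp n d K" using Suc.IH by blast
  qed
  finally show ?case by simp
qed

lemma sim_shape:
  assumes A: "finite A" "inj_on g A" and ord: "\<forall>x\<in>A. \<forall>y\<in>A. \<forall>u\<in>A. \<forall>v\<in>A. d x y < d u v \<longleftrightarrow> e (g x) (g y) < e (g u) (g v)"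
  shows "shape e (g ` A) = shape d A"
  unfolding shape_def using sim_shp[where d=d and e=e and g=g, OF A ord, of A] card_image[OF A(2)] by simp

definition phi :: "real \<Rightarrow> real" where "phi t = t / (1 + t)"
definition psi :: "real \<Rightarrow> real" where "psi t = (if t = 0 then 0 else 1 + phi t)"

lemma phi_mono: "0 \<le> s \<Longrightarrow> 0 \<le> t \<Longrightarrow> phi s < phi t \<longleftrightarrow> s < t"
  unfolding phi_def by (simp add: divide_less_eq less_divide_eq field_simps add_pos_nonneg)

lemma phi_le_mono: "0 \<le> s \<Longrightarrow> 0 \<le> t \<Longrightarrow> phi s \<le> phi t \<longleftrightarrow> s \<le> t"
  using phi_mono by (meson not_less)

lemma phi_bounds: "0 \<le> t \<Longrightarrow> 0 \<le> phi t \<and> phi t < 1"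
  unfolding phi_def by (simp add: divide_less_eq)

lemma phi_zero: "0 \<le> t \<Longrightarrow> phi t = 0 \<longleftrightarrow> t = 0"
  unfolding phi_def by (simp add: divide_eq_0_iff)

lemma psi_mono: "0 \<le> s \<Longrightarrow> 0 \<le> t \<Longrightarrow> psi s < psi t \<longleftrightarrow> s < t"
  unfolding psi_def using phi_mono phi_bounds by force

lemma psi_le_mono: "0 \<le> s \<Longrightarrow> 0 \<le> t \<Longrightarrow> psi s \<le> psi t \<longleftrightarrow> s \<le> t"
  using psi_mono by (meson not_less)

lemma psi_bounds: "0 \<le> t \<Longrightarrow> 0 \<le> psi t \<and> psi t < 2"
  unfolding psi_def using phi_bounds by force

lemma phi_pos: "0 < t \<Longrightarrow> 0 < phi t"
  unfolding phi_def by simp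

lemma psi_pos: "0 < t \<Longrightarrow> 1 < psi t"
  unfolding psi_def using phi_pos[of t] by simp

definition gX :: "nat set \<Rightarrow> nat set \<Rightarrow> nat set" where
  "gX X1 X2 = (\<lambda>x. 2*x) ` X1 \<union> (\<lambda>x. 2*x+1) ` X2"

definition gd :: "(nat \<Rightarrow> nat \<Rightarrow> real) \<Rightarrow> (nat \<Rightarrow> nat \<Rightarrow> real) \<Rightarrow> nat \<Rightarrow> nat \<Rightarrow> real" where
  "gd d1 d2 a b = (if even a \<and> even b then phi (d1 (a div 2) (b div 2))
     else if odd a \<and> odd b then psi (d2 (a div 2) (b div 2)) else 2)"

lemma gd_simps:
  "gd d1 d2 (2*x) (2*y) = phi (d1 x y)"
  "gd d1 d2 (2*x+1) (2*y+1) = psi (d2 x y)"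
  "gd d1 d2 (2*x) (2*y+1) = 2"
  "gd d1 d2 (2*x+1) (2*y) = 2"
  "gd d1 d2 (Suc (2*x)) (Suc (2*y)) = psi (d2 x y)"
  "gd d1 d2 (2*x) (Suc (2*y)) = 2"
  "gd d1 d2 (Suc (2*x)) (2*y) = 2"
  unfolding gd_def by simp_all

lemma gX_cases:
  assumes "a \<in> gX X1 X2"
  obtains x where "x \<in> X1" "a = 2*x" | x where "x \<in> X2" "a = 2*x+1"
  using assms unfolding gX_def by blast

lemma psi_zero: "0 \<le> t \<Longrightarrow> psi t = 0 \<longleftrightarrow> t = 0"
  unfolding psi_def using phi_bounds[of t] by auto

lemma phi_max: "0 \<le> s \<Longrightarrow> 0 \<le> t \<Longrightarrow> 0 \<le> r \<Longrightarrow> s \<le> max t r \<Longrightarrow> phi s \<le> max (phi t) (phi r)"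
proof -
  assume a: "0 \<le> s" "0 \<le> t" "0 \<le> r" "s \<le> max t r"
  show ?thesis
  proof (cases "t \<le> r")
    case True
    hence "s \<le> r" using a(4) by simp
    hence "phi s \<le> phi r" using phi_le_mono a by blast
    thus ?thesis by simp
  next
    case False
    hence "s \<le> t" using a(4) by simp
    hence "phi s \<le> phi t" using phi_le_mono a by blast
    thus ?thesis by simp
  qed
qed

lemma psi_max: "0 \<le> s \<Longrightarrow> 0 \<le> t \<Longrightarrow> 0 \<le> r \<Longrightarrow> s \<le> max t r \<Longrightarrow> psi s \<le> max (psi t) (psi r)"
proof -
  assume a: "0 \<le> s" "0 \<le> t" "0 \<le> r" "s \<le> max t r"
  show ?thesis
  proof (cases "t \<le> r")
    case True
    hence "s \<le> r" using a(4) by simp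
    hence "psi s \<le> psi r" using psi_le_mono a by blast
    thus ?thesis by simp
  next
    case False
    hence "s \<le> t" using a(4) by simp
    hence "psi s \<le> psi t" using psi_le_mono a by blast
    thus ?thesis by simp
  qed
qed

context
  fixes X1 X2 :: "nat set" and d1 d2 :: "nat \<Rightarrow> nat \<Rightarrow> real"
  assumes U1: "in_U X1 d1" and U2: "in_U X2 d2"
begin

lemma u1: "ultrametric X1 d1" "finite X1" "X1 \<noteq> {}" "card (Sp X1 d1) = card X1 - 1"
  using U1 unfolding in_U_def by auto
lemma u2: "ultrametric X2 d2" "finite X2" "X2 \<noteq> {}" "card (Sp X2 d2) = card X2 - 1"
  using U2 unfolding in_U_def by auto

abbreviation "GX \<equiv> gX X1 X2"
abbreviation "GD \<equiv> gd d1 d2"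

lemma gd_le2: "a \<in> GX \<Longrightarrow> b \<in> GX \<Longrightarrow> GD a b \<le> 2"
proof -
  assume a: "a \<in> GX" and b: "b \<in> GX"
  show ?thesis
  proof (cases rule: gX_cases[OF a])
    case (1 x)
    show ?thesis
    proof (cases rule: gX_cases[OF b])
      case (1 y) thus ?thesis using \<open>x \<in> X1\<close> \<open>a = 2*x\<close> phi_bounds[of "d1 x y"] um_facts(1)[OF u1(1)]
        by (simp add: gd_simps)
    next
      case (2 y) thus ?thesis using \<open>a = 2*x\<close> by (simp add: gd_simps)
    qed
  next
    case (2 x)
    show ?thesis
    proof (cases rule: gX_cases[OF b])
      case (1 y) thus ?thesis using \<open>a = 2*x+1\<close> by (simp add: gd_simps)
    next
      case (2 y) thus ?thesis using \<open>x \<in> X2\<close> \<open>a = 2*x+1\<close> psi_bounds[of "d2 x y"] um_facts(1)[OF u2(1)]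
        by (simp add: gd_simps)
    qed
  qed
qed

lemma g_basic:
  assumes a: "a \<in> GX" and b: "b \<in> GX"
  shows "0 \<le> GD a b \<and> (GD a b = 0 \<longleftrightarrow> a = b) \<and> GD a b = GD b a"
proof (cases rule: gX_cases[OF a])
  case (1 x)
  show ?thesis
  proof (cases rule: gX_cases[OF b])
    case (1 y)
    have "0 \<le> d1 x y" using um_facts(1)[OF u1(1) \<open>x \<in> X1\<close> \<open>y \<in> X1\<close>] .
    moreover have "d1 x y = d1 y x" using um_facts(3)[OF u1(1) \<open>x \<in> X1\<close> \<open>y \<in> X1\<close>] .
    moreover have "d1 x y = 0 \<longleftrightarrow> x = y"
      using um_facts(2)[OF u1(1) \<open>x \<in> X1\<close> \<open>y \<in> X1\<close>] um_facts(4)[OF u1(1) \<open>x \<in> X1\<close> \<open>y \<in> X1\<close>]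
      by (cases "x = y") auto
    ultimately have "0 \<le> d1 x y" "d1 x y = d1 y x" "d1 x y = 0 \<longleftrightarrow> x = y" by blast+
    thus ?thesis using \<open>a = 2*x\<close> \<open>b = 2*y\<close> phi_bounds phi_zero by (simp add: gd_simps)
  next
    case (2 y) thus ?thesis using \<open>a = 2*x\<close> by (simp add: gd_simps) presburger
  qed
next
  case (2 x)
  show ?thesis
  proof (cases rule: gX_cases[OF b])
    case (1 y) thus ?thesis using \<open>a = 2*x+1\<close> by (simp add: gd_simps) presburger
  next
    case (2 y)
    have "0 \<le> d2 x y" using um_facts(1)[OF u2(1) \<open>x \<in> X2\<close> \<open>y \<in> X2\<close>] .
    moreover have "d2 x y = d2 y x" using um_facts(3)[OF u2(1) \<open>x \<in> X2\<close> \<open>y \<in> X2\<close>] .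
    moreover have "d2 x y = 0 \<longleftrightarrow> x = y"
      using um_facts(2)[OF u2(1) \<open>x \<in> X2\<close> \<open>y \<in> X2\<close>] um_facts(4)[OF u2(1) \<open>x \<in> X2\<close> \<open>y \<in> X2\<close>]
      by (cases "x = y") auto
    ultimately have "0 \<le> d2 x y" "d2 x y = d2 y x" "d2 x y = 0 \<longleftrightarrow> x = y" by blast+
    thus ?thesis using \<open>a = 2*x+1\<close> \<open>b = 2*y+1\<close> psi_bounds psi_zero by (simp add: gd_simps)
  qed
qed

lemma g_tri:
  assumes a: "a \<in> GX" and b: "b \<in> GX" and c: "c \<in> GX"
  shows "GD a b \<le> max (GD a c) (GD c b)"
proof (cases rule: gX_cases[OF a])
  case (1 x)
  show ?thesis
  proof (cases rule: gX_cases[OF b])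
    case (1 y)
    show ?thesis
    proof (cases rule: gX_cases[OF c])
      case (1 z)
      have "d1 x y \<le> max (d1 x z) (d1 z y)" using um_tri[OF u1(1) \<open>x\<in>X1\<close> \<open>y\<in>X1\<close> \<open>z\<in>X1\<close>] .
      hence "phi (d1 x y) \<le> max (phi (d1 x z)) (phi (d1 z y))"
        using phi_max um_facts(1)[OF u1(1)] \<open>x\<in>X1\<close> \<open>y\<in>X1\<close> \<open>z\<in>X1\<close> by blast
      thus ?thesis using \<open>a = 2*x\<close> \<open>b = 2*y\<close> \<open>c = 2*z\<close> by (simp add: gd_simps)
    next
      case (2 z)
      have "GD a b \<le> 2" using gd_le2 a b by blast
      thus ?thesis using \<open>a = 2*x\<close> \<open>c = 2*z+1\<close> by (simp add: gd_simps)
    qed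
  next
    case (2 y)
    have "GD a b = 2" using \<open>a = 2*x\<close> \<open>b = 2*y+1\<close> by (simp add: gd_simps)
    show ?thesis
    proof (cases rule: gX_cases[OF c])
      case (1 z) thus ?thesis using \<open>GD a b = 2\<close> \<open>b = 2*y+1\<close> by (simp add: gd_simps)
    next
      case (2 z) thus ?thesis using \<open>GD a b = 2\<close> \<open>a = 2*x\<close> by (simp add: gd_simps)
    qed
  qed
next
  case (2 x)
  show ?thesis
  proof (cases rule: gX_cases[OF b])
    case (2 y)
    show ?thesis
    proof (cases rule: gX_cases[OF c])
      case (2 z)
      have "d2 x y \<le> max (d2 x z) (d2 z y)" using um_tri[OF u2(1) \<open>x\<in>X2\<close> \<open>y\<in>X2\<close> \<open>z\<in>X2\<close>] .
      hence "psi (d2 x y) \<le> max (psi (d2 x z)) (psi (d2 z y))"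
        using psi_max um_facts(1)[OF u2(1)] \<open>x\<in>X2\<close> \<open>y\<in>X2\<close> \<open>z\<in>X2\<close> by blast
      thus ?thesis using \<open>a = 2*x+1\<close> \<open>b = 2*y+1\<close> \<open>c = 2*z+1\<close> by (simp add: gd_simps)
    next
      case (1 z)
      have "GD a b \<le> 2" using gd_le2 a b by blast
      thus ?thesis using \<open>a = 2*x+1\<close> \<open>c = 2*z\<close> by (simp add: gd_simps)
    qed
  next
    case (1 y)
    have "GD a b = 2" using \<open>a = 2*x+1\<close> \<open>b = 2*y\<close> by (simp add: gd_simps)
    show ?thesis
    proof (cases rule: gX_cases[OF c])
      case (2 z) thus ?thesis using \<open>GD a b = 2\<close> \<open>b = 2*y\<close> by (simp add: gd_simps)
    next
      case (1 z) thus ?thesis using \<open>GD a b = 2\<close> \<open>a = 2*x+1\<close> by (simp add: gd_simps)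
    qed
  qed
qed

lemma g_ultra: "ultrametric GX GD"
  unfolding ultrametric_def using g_basic g_tri by blast

lemma g_fin: "finite GX"
  unfolding gX_def using u1(2) u2(2) by simp

lemma g_card: "card GX = card X1 + card X2"
proof -
  have i1: "inj_on (\<lambda>x::nat. 2*x) X1" by (simp add: inj_on_def)
  have i2: "inj_on (\<lambda>x::nat. 2*x+1) X2" by (simp add: inj_on_def)
  have dis: "(\<lambda>x::nat. 2*x) ` X1 \<inter> (\<lambda>x. 2*x+1) ` X2 = {}" by auto presburger
  show ?thesis unfolding gX_def
    using card_Un_disjoint[OF _ _ dis] card_image[OF i1] card_image[OF i2] u1(2) u2(2) by simp
qed


lemma phi_inj: "inj_on phi {t. 0 \<le> t}"
proof (rule inj_onI)
  fix s t assume "s \<in> {t. 0 \<le> t}" "t \<in> {t. 0 \<le> t}" "phi s = phi t"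
  thus "s = t" using phi_mono[of s t] phi_mono[of t s] by (cases s t rule: linorder_cases) auto
qed

lemma psi_inj: "inj_on psi {t. 0 \<le> t}"
proof (rule inj_onI)
  fix s t assume "s \<in> {t. 0 \<le> t}" "t \<in> {t. 0 \<le> t}" "psi s = psi t"
  thus "s = t" using psi_mono[of s t] psi_mono[of t s] by (cases s t rule: linorder_cases) auto
qed

lemma Sp_pos:
  assumes "ultrametric X d" "r \<in> Sp X d" shows "0 < r"
proof -
  obtain x y where "x \<in> X" "y \<in> X" "x \<noteq> y" "r = d x y" using assms(2) unfolding Sp_def by blast
  thus ?thesis using um_facts(4)[OF assms(1) \<open>x \<in> X\<close> \<open>y \<in> X\<close>] by simp
qed

lemma g_sp_lower: "card X1 + card X2 \<le> card (Sp GX GD) + 1"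
proof -
  define S1 where "S1 = Sp X1 d1"
  define S2 where "S2 = Sp X2 d2"
  have f1: "finite S1" "finite S2" unfolding S1_def S2_def using finite_Sp u1(2) u2(2) by auto
  have p1: "\<And>r. r \<in> S1 \<Longrightarrow> 0 < r" unfolding S1_def using Sp_pos[OF u1(1)] by blast
  have p2: "\<And>r. r \<in> S2 \<Longrightarrow> 0 < r" unfolding S2_def using Sp_pos[OF u2(1)] by blast
  have sub: "phi ` S1 \<union> psi ` S2 \<union> {2} \<subseteq> Sp GX GD"
  proof -
    have "phi r \<in> Sp GX GD" if r: "r \<in> S1" for r
    proof -
      obtain x y where xy: "x \<in> X1" "y \<in> X1" "x \<noteq> y" "r = d1 x y" using r unfolding S1_def Sp_def by blast
      have "2*x \<in> GX" "2*y \<in> GX" "2*x \<noteq> 2*y" using xy unfolding gX_def by auto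
      moreover have "phi r = GD (2*x) (2*y)" using xy(4) by (simp add: gd_simps)
      ultimately show ?thesis unfolding Sp_def by blast
    qed
    moreover have "psi r \<in> Sp GX GD" if r: "r \<in> S2" for r
    proof -
      obtain x y where xy: "x \<in> X2" "y \<in> X2" "x \<noteq> y" "r = d2 x y" using r unfolding S2_def Sp_def by blast
      have "2*x+1 \<in> GX" "2*y+1 \<in> GX" "2*x+1 \<noteq> 2*y+1" using xy unfolding gX_def by auto
      moreover have "psi r = GD (2*x+1) (2*y+1)" using xy(4) by (simp add: gd_simps)
      ultimately show ?thesis unfolding Sp_def by blast
    qed
    moreover have "(2::real) \<in> Sp GX GD"
    proof -
      obtain x y where xy: "x \<in> X1" "y \<in> X2" using u1(3) u2(3) by blast
      have "2*x \<in> GX" "2*y+1 \<in> GX" "2*x \<noteq> 2*y+1" using xy unfolding gX_def by (auto, presburger)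
      moreover have "(2::real) = GD (2*x) (2*y+1)" by (simp add: gd_simps)
      ultimately show ?thesis unfolding Sp_def by blast
    qed
    ultimately show ?thesis by blast
  qed
  have lt1: "\<And>r. r \<in> S1 \<Longrightarrow> phi r < 1" using phi_bounds p1 less_imp_le by blast
  have gt1: "\<And>r. r \<in> S2 \<Longrightarrow> 1 < psi r" using psi_pos p2 by blast
  have lt2: "\<And>r. r \<in> S2 \<Longrightarrow> psi r < 2" using psi_bounds p2 less_imp_le by blast
  have d1: "phi ` S1 \<inter> psi ` S2 = {}" using lt1 gt1 by fastforce
  have d2: "(phi ` S1 \<union> psi ` S2) \<inter> {2} = {}" using lt1 lt2 by fastforce
  have c1: "card (phi ` S1) = card S1"
    using card_image[OF inj_on_subset[OF phi_inj]] p1 by (simp add: subset_iff less_imp_le)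
  have c2: "card (psi ` S2) = card S2"
    using card_image[OF inj_on_subset[OF psi_inj]] p2 by (simp add: subset_iff less_imp_le)
  have "card (phi ` S1 \<union> psi ` S2 \<union> {2}) = card S1 + card S2 + 1"
    using card_Un_disjoint[OF _ _ d2] card_Un_disjoint[OF _ _ d1] f1 c1 c2 by simp
  moreover have "card (phi ` S1 \<union> psi ` S2 \<union> {2}) \<le> card (Sp GX GD)"
    using card_mono[OF finite_Sp[OF g_fin] sub] .
  ultimately have "card S1 + card S2 + 1 \<le> card (Sp GX GD)" by simp
  moreover have "0 < card X1" using card_gt_0_iff[of X1] u1(2,3) by simp
  moreover have "0 < card X2" using card_gt_0_iff[of X2] u2(2,3) by simp
  ultimately show ?thesis using u1(4) u2(4) unfolding S1_def S2_def by linarith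
qed

lemma g_inU: "in_U GX GD"
proof -
  have ne: "GX \<noteq> {}" unfolding gX_def using u1(3) by blast
  have "card (Sp GX GD) + 1 \<le> card GX" using sp_bound[OF g_ultra g_fin ne] .
  hence "card (Sp GX GD) = card GX - 1" using g_sp_lower g_card by linarith
  thus ?thesis unfolding in_U_def using g_fin ne g_ultra by blast
qed

lemma g_shape: "shape GD GX = Sh {#shape d1 X1, shape d2 X2#}"
proof -
  define Ev where "Ev = (\<lambda>x::nat. 2*x) ` X1"
  define Od where "Od = (\<lambda>x::nat. 2*x+1) ` X2"
  have GX: "GX = Ev \<union> Od" unfolding Ev_def Od_def gX_def ..
  obtain x0 y0 where xy0: "x0 \<in> X1" "y0 \<in> X2" using u1(3) u2(3) by blast
  have d1nn: "\<And>x y. x \<in> X1 \<Longrightarrow> y \<in> X1 \<Longrightarrow> 0 \<le> d1 x y" using um_facts(1)[OF u1(1)] by blast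
  have d2nn: "\<And>x y. x \<in> X2 \<Longrightarrow> y \<in> X2 \<Longrightarrow> 0 \<le> d2 x y" using um_facts(1)[OF u2(1)] by blast
  have diam2: "diam GX GD = 2"
  proof -
    have "2*x0 \<in> GX" "2*y0+1 \<in> GX" using xy0 unfolding gX_def by auto
    hence "GD (2*x0) (2*y0+1) \<le> diam GX GD" using diam_ge[OF g_fin] by blast
    hence "2 \<le> diam GX GD" by (simp add: gd_simps)
    moreover obtain a b where "a \<in> GX" "b \<in> GX" "diam GX GD = GD a b"
      using diam_attained[OF g_fin, of GD] \<open>2*x0 \<in> GX\<close> by blast
    ultimately show ?thesis using gd_le2 by fastforce
  qed
  have clsE: "cls GD GX a = Ev" if a: "a \<in> Ev" for a
  proof -
    obtain x where x: "x \<in> X1" "a = 2*x" using a unfolding Ev_def by blast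
    have "y \<in> cls GD GX a \<longleftrightarrow> y \<in> Ev" for y
    proof
      assume "y \<in> cls GD GX a"
      hence y: "y \<in> GX" "GD a y < 2" unfolding cls_def diam2 by auto
      show "y \<in> Ev"
      proof (rule ccontr)
        assume "y \<notin> Ev"
        then obtain z where "y = 2*z+1" using y(1) GX unfolding Od_def by blast
        thus False using y(2) x(2) by (simp add: gd_simps)
      qed
    next
      assume "y \<in> Ev"
      then obtain z where z: "z \<in> X1" "y = 2*z" unfolding Ev_def by blast
      have "phi (d1 x z) < 1" using phi_bounds d1nn[OF x(1) z(1)] by blast
      hence "GD a y < 2" using x(2) z(2) by (simp add: gd_simps)
      thus "y \<in> cls GD GX a" unfolding cls_def diam2 using GX \<open>y \<in> Ev\<close> by blast
    qed
    thus ?thesis by blast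
  qed
  have clsO: "cls GD GX a = Od" if a: "a \<in> Od" for a
  proof -
    obtain x where x: "x \<in> X2" "a = 2*x+1" using a unfolding Od_def by blast
    have "y \<in> cls GD GX a \<longleftrightarrow> y \<in> Od" for y
    proof
      assume "y \<in> cls GD GX a"
      hence y: "y \<in> GX" "GD a y < 2" unfolding cls_def diam2 by auto
      show "y \<in> Od"
      proof (rule ccontr)
        assume "y \<notin> Od"
        then obtain z where "y = 2*z" using y(1) GX unfolding Ev_def by blast
        thus False using y(2) x(2) by (simp add: gd_simps)
      qed
    next
      assume "y \<in> Od"
      then obtain z where z: "z \<in> X2" "y = 2*z+1" unfolding Od_def by blast
      have "psi (d2 x z) < 2" using psi_bounds d2nn[OF x(1) z(1)] by blast
      hence "GD a y < 2" using x(2) z(2) by (simp add: gd_simps)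
      thus "y \<in> cls GD GX a" unfolding cls_def diam2 using GX \<open>y \<in> Od\<close> by blast
    qed
    thus ?thesis by blast
  qed
  have neE: "Ev \<noteq> {}" "Od \<noteq> {}" unfolding Ev_def Od_def using xy0 by auto
  have c2: "card GX \<ge> 2" using g_card u1(2,3) u2(2,3) card_gt_0_iff[of X1] card_gt_0_iff[of X2] by linarith
  have "cls GD GX ` GX = cls GD GX ` Ev \<union> cls GD GX ` Od" using GX by blast
  also have "cls GD GX ` Ev = {Ev}" using clsE neE(1) by blast
  also have "cls GD GX ` Od = {Od}" using clsO neE(2) by blast
  finally have ch: "tchildren GD GX = {Ev, Od}" using tchildren_cls[OF c2] by (simp add: insert_commute)
  have "2*x0 \<in> Ev" "2*x0 \<notin> Od" unfolding Ev_def Od_def using xy0 by (auto, presburger)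
  hence EO: "Ev \<noteq> Od" by blast
  have sE: "shape GD Ev = shape d1 X1"
    unfolding Ev_def
  proof (rule sim_shape)
    show "finite X1" by (rule u1(2))
    show "inj_on (\<lambda>x::nat. 2*x) X1" by (simp add: inj_on_def)
    show "\<forall>x\<in>X1. \<forall>y\<in>X1. \<forall>u\<in>X1. \<forall>v\<in>X1. d1 x y < d1 u v \<longleftrightarrow> GD (2*x) (2*y) < GD (2*u) (2*v)"
      using phi_mono d1nn by (simp add: gd_simps)
  qed
  have sO: "shape GD Od = shape d2 X2"
    unfolding Od_def
  proof (rule sim_shape)
    show "finite X2" by (rule u2(2))
    show "inj_on (\<lambda>x::nat. 2*x+1) X2" by (simp add: inj_on_def)
    show "\<forall>x\<in>X2. \<forall>y\<in>X2. \<forall>u\<in>X2. \<forall>v\<in>X2. d2 x y < d2 u v \<longleftrightarrow> GD (2*x+1) (2*y+1) < GD (2*u+1) (2*v+1)"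
      using psi_mono d2nn by (simp add: gd_simps)
  qed
  show ?thesis using shape_pair[OF g_ultra g_fin ch EO] sE sO by simp
qed
end

lemma realize:
  assumes "bin t n"
  shows "\<exists>X (d::nat \<Rightarrow> nat \<Rightarrow> real). in_U X d \<and> card X = n \<and> shape d X = t"
  using assms
proof (induction rule: bin.induct)
  case leaf
  have u: "ultrametric {0::nat} (\<lambda>_ _. 0)" unfolding ultrametric_def by simp
  have "Sp {0::nat} (\<lambda>_ _. 0) = {}" unfolding Sp_def by simp
  hence U: "in_U {0::nat} (\<lambda>_ _. 0)" unfolding in_U_def using u by simp
  have "shape (\<lambda>_ _. 0) {0::nat} = Sh {#}"
    using shape_unfold[OF u] tchildren_small[of "{0::nat}"] by simp
  thus ?case using U by (intro exI[of _ "{0::nat}"] exI[of _ "\<lambda>_ _. 0"]) simp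
next
  case (node a p b q)
  obtain X1 and d1 :: "nat \<Rightarrow> nat \<Rightarrow> real" where A: "in_U X1 d1" "card X1 = p" "shape d1 X1 = a"
    using node.IH(1) by blast
  obtain X2 and d2 :: "nat \<Rightarrow> nat \<Rightarrow> real" where B: "in_U X2 d2" "card X2 = q" "shape d2 X2 = b"
    using node.IH(2) by blast
  show ?case
    using g_inU[OF A(1) B(1)] g_card[OF A(1) B(1)] g_shape[OF A(1) B(1)] A B
    by (intro exI[of _ "gX X1 X2"] exI[of _ "gd d1 d2"]) simp
qed

lemma mset2:
  assumes "{#a, b#} = {#c, d#}"
  shows "(a = c \<and> b = d) \<or> (a = d \<and> b = c)"
proof -
  have "a \<in># {#c, d#}" using assms[symmetric] by (metis add_mset_commute union_single_eq_member)
  hence "a = c \<or> a = d" by simp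
  thus ?thesis
  proof
    assume "a = c"
    hence "{#b#} = {#d#}" using assms by simp
    thus ?thesis using \<open>a = c\<close> by simp
  next
    assume "a = d"
    hence "add_mset d {#b#} = add_mset d {#c#}" using assms by (simp add: add_mset_commute)
    hence "b = c" by simp
    thus ?thesis using \<open>a = d\<close> by simp
  qed
qed

lemma bin_pos: "bin t n \<Longrightarrow> n \<ge> 1"
  by (induction rule: bin.induct) auto

lemma bin_unique: "bin t n \<Longrightarrow> bin t m \<Longrightarrow> n = m"
proof (induction arbitrary: m rule: bin.induct)
  case leaf
  from leaf show ?case by (cases rule: bin.cases) auto
next
  case (node a p b q)
  from node.prems show ?case
  proof (cases rule: bin.cases)
    case leaf thus ?thesis by simp
  next
    case (node a' p' b' q')
    hence "{#a, b#} = {#a', b'#}" by simp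
    hence "(a = a' \<and> b = b') \<or> (a = b' \<and> b = a')" by (rule mset2)
    thus ?thesis
    proof
      assume "a = a' \<and> b = b'"
      thus ?thesis using node.IH node by auto
    next
      assume "a = b' \<and> b = a'"
      thus ?thesis using node.IH node by auto
    qed
  qed
qed

definition Bn :: "nat \<Rightarrow> shape set" where "Bn n = {t. bin t n}"

definition Pairs :: "nat \<Rightarrow> nat \<Rightarrow> shape set" where
  "Pairs p q = (\<lambda>(a, b). Sh {#a, b#}) ` (Bn p \<times> Bn q)"

lemma Bn_1: "Bn (Suc 0) = {Sh {#}}"
proof -
  have "t = Sh {#}" if "bin t (Suc 0)" for t
    using that
  proof (cases rule: bin.cases)
    case leaf thus ?thesis by simp
  next
    case (node a p b q)
    have "p \<ge> 1" "q \<ge> 1" using node(3,4) bin_pos by auto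
    thus ?thesis using node(2) by simp
  qed
  moreover have "bin (Sh {#}) (Suc 0)" using bin.leaf by simp
  ultimately show ?thesis unfolding Bn_def by blast
qed


lemma Bn_decomp:
  assumes "n \<ge> 2"
  shows "Bn n = (\<Union>p\<in>{1..n div 2}. Pairs p (n - p))"
proof
  show "Bn n \<subseteq> (\<Union>p\<in>{1..n div 2}. Pairs p (n - p))"
  proof
    fix t assume "t \<in> Bn n"
    hence "bin t n" unfolding Bn_def by simp
    thus "t \<in> (\<Union>p\<in>{1..n div 2}. Pairs p (n - p))"
    proof (cases rule: bin.cases)
      case leaf thus ?thesis using assms by simp
    next
      case (node a p b q)
      have p1: "p \<ge> 1" "q \<ge> 1" using node bin_pos by auto
      show ?thesis
      proof (cases "p \<le> q")
        case True
        hence "p \<in> {1..n div 2}" using p1 node(2) by auto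
        moreover have "t \<in> Pairs p (n - p)" unfolding Pairs_def Bn_def using node by force
        ultimately show ?thesis by blast
      next
        case False
        hence qI: "q \<in> {1..n div 2}" using p1 node(2) by auto
        have "t = Sh {#b, a#}" using node(1) by (simp add: add_mset_commute)
        moreover have "n - q = p" using node(2) by simp
        ultimately have "t \<in> Pairs q (n - q)" unfolding Pairs_def Bn_def using node(3,4) by force
        thus ?thesis using qI by blast
      qed
    qed
  qed
next
  show "(\<Union>p\<in>{1..n div 2}. Pairs p (n - p)) \<subseteq> Bn n"
  proof
    fix t assume "t \<in> (\<Union>p\<in>{1..n div 2}. Pairs p (n - p))"
    then obtain p a b where "p \<in> {1..n div 2}" "bin a p" "bin b (n - p)" "t = Sh {#a, b#}"
      unfolding Pairs_def Bn_def by auto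
    hence "bin t (p + (n - p))" using bin.node by simp
    moreover have "p + (n - p) = n" using \<open>p \<in> {1..n div 2}\<close> by auto
    ultimately show "t \<in> Bn n" unfolding Bn_def by simp
  qed
qed

lemma Bn_finite: "finite (Bn n)"
proof (induction n rule: less_induct)
  case (less n)
  show ?case
  proof (cases "n \<ge> 2")
    case True
    have "finite (Pairs p (n - p))" if "p \<in> {1..n div 2}" for p
    proof -
      have "p < n" "n - p < n" using that True by auto
      thus ?thesis unfolding Pairs_def using less by simp
    qed
    thus ?thesis using Bn_decomp[OF True] by simp
  next
    case False
    hence "n = 0 \<or> n = 1" by auto
    thus ?thesis
    proof
      assume "n = 0"
      hence "Bn n = {}" unfolding Bn_def using bin_pos by fastforce
      thus ?thesis by simp
    qed (simp add: Bn_1)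
  qed
qed

lemma Pairs_disj:
  assumes "p \<in> {1..n div 2}" "p' \<in> {1..n div 2}" "p \<noteq> p'"
  shows "Pairs p (n - p) \<inter> Pairs p' (n - p') = {}"
proof (rule ccontr)
  assume "Pairs p (n - p) \<inter> Pairs p' (n - p') \<noteq> {}"
  then obtain a b a' b' where ab: "bin a p" "bin b (n - p)" "bin a' p'" "bin b' (n - p')"
    "Sh {#a, b#} = Sh {#a', b'#}" unfolding Pairs_def Bn_def by auto
  hence "(a = a' \<and> b = b') \<or> (a = b' \<and> b = a')" using mset2 by simp
  thus False
  proof
    assume "a = a' \<and> b = b'"
    thus False using bin_unique ab assms(3) by blast
  next
    assume "a = b' \<and> b = a'"
    hence "p = n - p'" using bin_unique ab by blast
    thus False using assms by auto
  qed
qed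

lemma Pairs_card_ne:
  assumes "p \<noteq> q"
  shows "card (Pairs p q) = card (Bn p) * card (Bn q)"
proof -
  have "inj_on (\<lambda>(a, b). Sh {#a, b#}) (Bn p \<times> Bn q)"
  proof (rule inj_onI)
    fix x y assume x: "x \<in> Bn p \<times> Bn q" and y: "y \<in> Bn p \<times> Bn q"
      and e: "(\<lambda>(a, b). Sh {#a, b#}) x = (\<lambda>(a, b). Sh {#a, b#}) y"
    obtain a b a' b' where xy: "x = (a, b)" "y = (a', b')" by (cases x, cases y) auto
    have bb: "bin a p" "bin b q" "bin a' p" "bin b' q" using x y xy unfolding Bn_def by auto
    have "{#a, b#} = {#a', b'#}" using e xy by simp
    hence "(a = a' \<and> b = b') \<or> (a = b' \<and> b = a')" by (rule mset2)
    moreover have "\<not> (a = b' \<and> b = a')" using bb bin_unique assms by blast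
    ultimately show "x = y" using xy by simp
  qed
  thus ?thesis unfolding Pairs_def using card_image card_cartesian_product by metis
qed

lemma Pairs_card_eq:
  "card (Pairs m m) = card (Bn m) * (card (Bn m) + 1) div 2"
proof -
  define T where "T = Bn m"
  have fT: "finite T" unfolding T_def by (rule Bn_finite)
  define D where "D = (\<lambda>a. Sh {#a, a#}) ` T"
  define N where "N = (\<lambda>s. Sh (mset_set s)) ` {s. s \<subseteq> T \<and> card s = 2}"
  have eq: "Pairs m m = D \<union> N"
  proof
    show "Pairs m m \<subseteq> D \<union> N"
    proof
      fix t assume "t \<in> Pairs m m"
      then obtain a b where ab: "a \<in> T" "b \<in> T" "t = Sh {#a, b#}" unfolding Pairs_def T_def by auto
      show "t \<in> D \<union> N"
      proof (cases "a = b")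
        case True thus ?thesis using ab unfolding D_def by blast
      next
        case False
        have m: "mset_set {a, b} = {#a, b#}" using False by simp
        have "{a, b} \<in> {s. s \<subseteq> T \<and> card s = 2}" using ab False by auto
        hence "(\<lambda>s. Sh (mset_set s)) {a, b} \<in> N" unfolding N_def by (rule imageI)
        hence "t \<in> N" using ab(3) m by simp
        thus ?thesis by blast
      qed
    qed
  next
    show "D \<union> N \<subseteq> Pairs m m"
    proof
      fix t assume "t \<in> D \<union> N"
      thus "t \<in> Pairs m m"
      proof
        assume "t \<in> D" thus ?thesis unfolding D_def Pairs_def T_def by auto
      next
        assume "t \<in> N"
        then obtain s where s: "s \<subseteq> T" "card s = 2" "t = Sh (mset_set s)" unfolding N_def by blast
        then obtain a b where "s = {a, b}" "a \<noteq> b" unfolding card_2_iff by blast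
        hence "t = Sh {#a, b#}" "a \<in> T" "b \<in> T" using s by auto
        thus ?thesis unfolding Pairs_def T_def by force
      qed
    qed
  qed
  have dis: "D \<inter> N = {}"
  proof (rule ccontr)
    assume "D \<inter> N \<noteq> {}"
    then obtain a s where "a \<in> T" "s \<subseteq> T" "card s = 2" "{#a, a#} = mset_set s"
      unfolding D_def N_def by auto
    hence "set_mset {#a, a#} = s" using finite_subset[OF _ fT] by (metis finite_set_mset_mset_set)
    hence "s = {a}" by simp
    thus False using \<open>card s = 2\<close> by simp
  qed
  have cD: "card D = card T" unfolding D_def by (rule card_image) (auto simp: inj_on_def dest: mset2)
  have "inj_on (\<lambda>s. Sh (mset_set s)) {s. s \<subseteq> T \<and> card s = 2}"
  proof (rule inj_onI)
    fix s s' assume "s \<in> {s. s \<subseteq> T \<and> card s = 2}" "s' \<in> {s. s \<subseteq> T \<and> card s = 2}"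
      "Sh (mset_set s) = Sh (mset_set s')"
    thus "s = s'" using finite_subset[OF _ fT] by (metis shape.inject finite_set_mset_mset_set mem_Collect_eq)
  qed
  hence cN: "card N = card T choose 2" unfolding N_def using card_image n_subsets[OF fT] by metis
  have fD: "finite D" "finite N" using fT unfolding D_def N_def by auto
  have "card (Pairs m m) = card T + (card T choose 2)" using eq card_Un_disjoint[OF fD dis] cD cN by simp
  also have "\<dots> = card T * (card T + 1) div 2"
  proof -
    have "2 * (card T choose 2) = card T * (card T - 1)"
      using choose_two[of "card T"] by (cases "card T") auto
    moreover have "card T * (card T + 1) = 2 * card T + card T * (card T - 1)"
      by (cases "card T") (auto simp: algebra_simps)
    ultimately show ?thesis by simp
  qed
  finally show ?thesis unfolding T_def .
qed

definition W :: "nat \<Rightarrow> nat" where "W n = card (Bn n)"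

lemma W_rec:
  assumes "n \<ge> 2"
  shows "W n = (\<Sum>p\<in>{1..n div 2}. if 2 * p = n then W p * (W p + 1) div 2 else W p * W (n - p))"
proof -
  have "W n = (\<Sum>p\<in>{1..n div 2}. card (Pairs p (n - p)))"
    unfolding W_def Bn_decomp[OF assms]
  proof (rule card_UN_disjoint)
    show "finite {1..n div 2}" by simp
    show "\<forall>i\<in>{1..n div 2}. finite (Pairs i (n - i))" unfolding Pairs_def using Bn_finite by simp
    show "\<forall>i\<in>{1..n div 2}. \<forall>j\<in>{1..n div 2}. i \<noteq> j \<longrightarrow> Pairs i (n - i) \<inter> Pairs j (n - j) = {}"
      using Pairs_disj by blast
  qed
  also have "\<dots> = (\<Sum>p\<in>{1..n div 2}. if 2 * p = n then W p * (W p + 1) div 2 else W p * W (n - p))"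
  proof (rule sum.cong[OF refl])
    fix p assume "p \<in> {1..n div 2}"
    show "card (Pairs p (n - p)) = (if 2 * p = n then W p * (W p + 1) div 2 else W p * W (n - p))"
    proof (cases "2 * p = n")
      case True
      hence "n - p = p" by simp
      thus ?thesis using True Pairs_card_eq[of p] unfolding W_def by simp
    next
      case False
      hence "p \<noteq> n - p" by simp
      thus ?thesis using False Pairs_card_ne unfolding W_def by simp
    qed
  qed
  finally show ?thesis .
qed

lemma quot_card:
  assumes "\<And>p q. p \<in> S \<Longrightarrow> q \<in> S \<Longrightarrow> R' p q \<longleftrightarrow> F p = F q"
  shows "card (S // {(p, q). p \<in> S \<and> q \<in> S \<and> R' p q}) = card (F ` S)"
proof -
  define R where "R = {(p, q). p \<in> S \<and> q \<in> S \<and> R' p q}"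
  have img: "R `` {x} = {q \<in> S. F q = F x}" if "x \<in> S" for x
    unfolding R_def using assms that by auto
  have "S // R = (\<lambda>x. {q \<in> S. F q = F x}) ` S"
    unfolding quotient_def using img by auto
  also have "\<dots> = (\<lambda>v. {q \<in> S. F q = v}) ` (F ` S)" by (simp add: image_image)
  finally have eq: "S // R = (\<lambda>v. {q \<in> S. F q = v}) ` (F ` S)" .
  have "inj_on (\<lambda>v. {q \<in> S. F q = v}) (F ` S)"
  proof (rule inj_onI)
    fix v v' assume "v \<in> F ` S" "v' \<in> F ` S" and e: "{q \<in> S. F q = v} = {q \<in> S. F q = v'}"
    then obtain x where "x \<in> S" "v = F x" by blast
    hence "x \<in> {q \<in> S. F q = v'}" using e by blast
    thus "v = v'" using \<open>v = F x\<close> by simp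
  qed
  thus ?thesis using eq card_image unfolding R_def by metis
qed

lemma B_W: "B k = W (Suc k)"
proof -
  define F where "F = (\<lambda>p :: nat set \<times> (nat \<Rightarrow> nat \<Rightarrow> real). shape (snd p) (fst p))"
  have iff: "tree_iso (fst p) (snd p) (fst q) (snd q) \<longleftrightarrow> F p = F q"
    if "p \<in> U_spaces k" "q \<in> U_spaces k" for p q
  proof -
    have "in_U (fst p) (snd p)" "in_U (fst q) (snd q)" using that unfolding U_spaces_def by auto
    hence "ultrametric (fst p) (snd p)" "finite (fst p)" "ultrametric (fst q) (snd q)" "finite (fst q)"
      unfolding in_U_def by auto
    thus ?thesis using tree_iso_shape unfolding F_def by blast
  qed
  have "B k = card (F ` U_spaces k)"
    unfolding B_def by (rule quot_card) (rule iff)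
  also have "F ` U_spaces k = Bn (Suc k)"
  proof
    show "F ` U_spaces k \<subseteq> Bn (Suc k)"
    proof
      fix t assume "t \<in> F ` U_spaces k"
      then obtain p where p: "p \<in> U_spaces k" "t = F p" by blast
      obtain X d where "p = (X, d)" by (cases p)
      hence "in_U X d" "card X = Suc k" "t = shape d X" using p unfolding F_def U_spaces_def by auto
      thus "t \<in> Bn (Suc k)" unfolding Bn_def using U_bin[of X d] by simp
    qed
  next
    show "Bn (Suc k) \<subseteq> F ` U_spaces k"
    proof
      fix t assume "t \<in> Bn (Suc k)"
      hence "bin t (Suc k)" unfolding Bn_def by simp
      then obtain X and d :: "nat \<Rightarrow> nat \<Rightarrow> real" where "in_U X d" "card X = Suc k" "shape d X = t"
        using realize by blast
      hence "(X, d) \<in> U_spaces k" "F (X, d) = t" unfolding U_spaces_def F_def by auto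
      thus "t \<in> F ` U_spaces k" by force
    qed
  qed
  finally show ?thesis unfolding W_def .
qed

lemma W1: "W 1 = 1"
  unfolding W_def using Bn_1 by simp

lemma B_odd: "B (2*i+1) = B i * (B i + 1) div 2 + (\<Sum>j<i. B (2*i+1 - j - 1) * B j)"
proof -
  define n where "n = 2*i+2"
  have n2: "n \<ge> 2" "n div 2 = i + 1" unfolding n_def by auto
  define f where "f p = (if 2 * p = n then W p * (W p + 1) div 2 else W p * W (n - p))" for p
  have "W n = sum f {1..i+1}" using W_rec[OF n2(1)] n2(2) unfolding f_def by simp
  also have "\<dots> = sum f {1..i} + f (i+1)" by simp
  also have "f (i+1) = W (i+1) * (W (i+1) + 1) div 2" unfolding f_def n_def by simp
  also have "sum f {1..i} = (\<Sum>j<i. W (n - (j+1)) * W (j+1))"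
  proof -
    have "sum f {1..i} = sum f {Suc 0..<Suc i}" by (simp add: atLeastLessThanSuc_atLeastAtMost)
    also have "\<dots> = (\<Sum>j\<in>{0..<i}. f (Suc j))" by (rule sum.shift_bounds_Suc_ivl)
    also have "\<dots> = (\<Sum>j<i. W (n - (j+1)) * W (j+1))"
    proof -
      have "f (Suc j) = W (n - (j+1)) * W (j+1)" if "j < i" for j
        using that unfolding f_def n_def by simp
      thus ?thesis by (simp add: lessThan_atLeast0)
    qed
    finally show ?thesis .
  qed
  finally have "W n = (\<Sum>j<i. W (n - (j+1)) * W (j+1)) + W (i+1) * (W (i+1) + 1) div 2" .
  moreover have "(\<Sum>j<i. B (2*i+1 - j - 1) * B j) = (\<Sum>j<i. W (n - (j+1)) * W (j+1))"
  proof (rule sum.cong[OF refl])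
    fix j assume "j \<in> {..<i}"
    hence "Suc (2*i+1 - j - 1) = n - (j+1)" unfolding n_def by simp
    thus "B (2*i+1 - j - 1) * B j = W (n - (j+1)) * W (j+1)" using B_W by simp
  qed
  ultimately show ?thesis using B_W unfolding n_def by simp
qed

lemma B_even:
  assumes "i \<ge> 1"
  shows "B (2*i) = (\<Sum>j<i. B (2*i - j - 1) * B j)"
proof -
  define n where "n = 2*i+1"
  have n2: "n \<ge> 2" "n div 2 = i" unfolding n_def using assms by auto
  define f where "f p = (if 2 * p = n then W p * (W p + 1) div 2 else W p * W (n - p))" for p
  have "W n = sum f {1..i}" using W_rec[OF n2(1)] n2(2) unfolding f_def by simp
  also have "sum f {1..i} = (\<Sum>j<i. W (n - (j+1)) * W (j+1))"
  proof -
    have "sum f {1..i} = sum f {Suc 0..<Suc i}" by (simp add: atLeastLessThanSuc_atLeastAtMost)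
    also have "\<dots> = (\<Sum>j\<in>{0..<i}. f (Suc j))" by (rule sum.shift_bounds_Suc_ivl)
    also have "\<dots> = (\<Sum>j<i. W (n - (j+1)) * W (j+1))"
    proof -
      have "f (Suc j) = W (n - (j+1)) * W (j+1)" if "j < i" for j
      proof -
        have "2 * Suc j \<noteq> n" unfolding n_def by presburger
        thus ?thesis unfolding f_def by simp
      qed
      thus ?thesis by (simp add: lessThan_atLeast0)
    qed
    finally show ?thesis .
  qed
  finally have "W n = (\<Sum>j<i. W (n - (j+1)) * W (j+1))" .
  moreover have "(\<Sum>j<i. B (2*i - j - 1) * B j) = (\<Sum>j<i. W (n - (j+1)) * W (j+1))"
  proof (rule sum.cong[OF refl])
    fix j assume "j \<in> {..<i}"
    hence "Suc (2*i - j - 1) = n - (j+1)" unfolding n_def by simp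
    thus "B (2*i - j - 1) * B j = W (n - (j+1)) * W (j+1)" using B_W by simp
  qed
  ultimately show ?thesis using B_W unfolding n_def by simp
qed

theorem theorem19:
  shows "(\<forall>k\<ge>1. \<forall>i.
            (k = 2*i + 1 \<longrightarrow> B k = B i * (B i + 1) div 2 + (\<Sum>j<i. B (k - j - 1) * B j)) \<and>
            (k = 2*i \<longrightarrow> B k = (\<Sum>j<i. B (k - j - 1) * B j)))
         \<and> B 1 = 1 \<and> B 2 = 1 \<and> B 3 = 2"
proof -
  have A: "\<forall>k\<ge>1. \<forall>i.
            (k = 2*i + 1 \<longrightarrow> B k = B i * (B i + 1) div 2 + (\<Sum>j<i. B (k - j - 1) * B j)) \<and>
            (k = 2*i \<longrightarrow> B k = (\<Sum>j<i. B (k - j - 1) * B j))"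
  proof (intro allI impI conjI)
    fix k i :: nat
    assume "k = 2*i + 1"
    thus "B k = B i * (B i + 1) div 2 + (\<Sum>j<i. B (k - j - 1) * B j)" using B_odd by simp
  next
    fix k i :: nat
    assume "1 \<le> k" "k = 2*i"
    hence "i \<ge> 1" by simp
    thus "B k = (\<Sum>j<i. B (k - j - 1) * B j)" using B_even \<open>k = 2*i\<close> by simp
  qed
  have B0: "B 0 = 1" using B_W[of 0] W1 by simp
  have B1: "B 1 = 1" using B_odd[of 0] B0 by simp
  have B2: "B 2 = 1" using B_even[of 1] B0 B1 by simp
  have B3: "B 3 = 2" using B_odd[of 1] B0 B1 B2 by (simp add: numeral_3_eq_3 numeral_2_eq_2)
  show ?thesis using A B1 B2 B3 by blast
qed

end
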